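(* Let $f\in F$. Then $\ell(x_0^{-1}f)<\ell(f)$ if and only if one of the following holds: (1) the reduced forest diagram of $x_0^{-1}f$ has smaller support than that of $f$; (2) the left space of $f$ has label pair $(L,L)$; (3) the left space of $f$ has label pair $(L,I)$ and the current tree of $f$ is trivial.
   Context: Thompson's group $F$ is realized as the group of all orientation-preserving piecewise-linear homeomorphisms $f$ of $\mathbb R$ with finitely many breakpoints, all breakpoints having dyadic rational coordinates, all slopes integral powers of $2$, and with $f(t)=t-m$ for all sufficiently negative $t$ and $f(t)=t-n$ for all sufficiently positive $t$, for some integers $m,n$. Products are compositions of functions: $fg=f\circ g$. The generators are $x_0(t)=t-1$ and $x_1(t)=t$ for $t\le 0$, $x_1(t)=t/2$ for $0\le t\le 2$, $x_1(t)=t-1$ for $t\ge 2$. A forest diagram for $x_0^{-1}f$ is obtained from one for $f$ by moving the top pointer one tree to the left. Forest diagrams: a binary forest is a sequence $(T_i)_{i\in\mathbb Z}$ of finite rooted binary trees (every node has $0$ or $2$ children; internal nodes are called carets; a trivial tree is a single leaf), all but finitely many trivial, together with a pointer marking $T_0$. Tree $T_i$ represents the interval $[i,i+1]$, each caret represents halving the interval of its node, and the leaves of the forest give a dyadic subdivision of $\mathbb R$. A forest diagram for $f$ is a pair of binary forests, the bottom (domain) forest with subdivision $\mathcal D$ and the top (range) forest with subdivision $\mathcal R$, such that $f$ maps each interval of $\mathcal D$ linearly onto an interval of $\mathcal R$; this matches the leaves of the two forests by an order-preserving bijection, so the two forests share one linearly ordered set of leaves (columns). A reduction deletes an opposing pair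 of carets, i.e. a top caret and a bottom caret both of whose children are leaves and which have the same two (matched) leaves. A forest diagram is reduced if no reduction is possible; every element of $F$ has a unique reduced forest diagram. The support of a forest diagram is the smallest set of consecutive columns containing all leaves of nontrivial trees of either forest and the leaves of the two trees marked by the two pointers. A space is a gap between two consecutive columns; the spaces in the support are the gaps between consecutive columns of the support. The current tree of $f$ is the tree of the top forest (of the reduced diagram) marked by the top pointer; the right (resp. left) space of $f$ is the space immediately to the right (resp. left) of the current tree. Labels: in each of the two forests separately (using that forest's own pointer), a space is interior if the leaves on both sides of it belong to the same tree and exterior otherwise; it lies immediately to the left of a caret $c$ of that forest if the leaf immediately to its right is the leftmost leaf descending from $c$. Each space of the support receives a label in each forest: $L$ if it is exterior and to the left of the tree marked by the pointer; otherwise $N$ if it lies immediately to the left of some caret; otherwise $R$ if it is exterior (hence to the right of the marked tree); otherwise $I$ (interior). A space thus has a label pair (top label, bottom label); spaces outside the support are unlabeled. Weights, by (top, bottom): $(L,L)=2$, $(L,N)=1$, $(L,R)=1$, $(L,I)=1$; $(N,L)=1$, $(N,N)=2$, $(N,R)=2$, $(N,I)=2$; $(R,L)=1$, $(R,N)=2$, $(R,R)=2$, $(R,I)=0$; $(I,L)=1$, $(I,N)=2$, $(I,R)=0$, $(I,I)=0$. For $f\in F$, $\ell(f)=\ell_0(f)+\ell_1(f)$, where $\ell_0(f)$ is the sum of the weights of the spaces in the support of the reduced forest diagram of $f$ and $\ell_1(f)$ is its total number of carets; $\ell(f)$ equals the word length of $f$ with respect to $\{x_0,x_1\}$. *)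

theory Defs
  imports Complex_Main
begin

definition dyadic :: "real \<Rightarrow> bool" where
  "dyadic x \<longleftrightarrow> (\<exists>k::int. \<exists>n::nat. x = of_int k / 2 ^ n)"

definition thompsonF :: "(real \<Rightarrow> real) set" where
  "thompsonF = {f. strict_mono f \<and> surj f \<and> continuous_on UNIV f \<and>
     (\<exists>P. finite P \<and> (\<forall>x\<in>P. dyadic x \<and> dyadic (f x)) \<and>
        (\<forall>a b. a < b \<and> {a<..<b} \<inter> P = {} \<longrightarrow>
           (\<exists>k::int. \<exists>c. \<forall>t\<in>{a<..<b}. f t = 2 powi k * t + c))) \<and>
     (\<exists>m n :: int. \<exists>a b. (\<forall>t\<le>a. f t = t - of_int m) \<and> (\<forall>t\<ge>b. f t = t - of_int n))}"

definition x0 :: "real \<Rightarrow> real" where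
  "x0 t = t - 1"

definition x1 :: "real \<Rightarrow> real" where
  "x1 t = (if t \<le> 0 then t else if t \<le> 2 then t / 2 else t - 1)"

datatype tree = Leaf | Node tree tree

text \<open>Leaf intervals, caret intervals and carets with two leaf children, of a tree
  drawn over the interval [a,b] (each caret halves the interval of its node).\<close>
fun leaves :: "real \<Rightarrow> real \<Rightarrow> tree \<Rightarrow> (real \<times> real) set" where
  "leaves a b Leaf = {(a, b)}"
| "leaves a b (Node l r) = leaves a ((a + b) / 2) l \<union> leaves ((a + b) / 2) b r"

fun carets :: "real \<Rightarrow> real \<Rightarrow> tree \<Rightarrow> (real \<times> real) set" where
  "carets a b Leaf = {}"
| "carets a b (Node l r) = insert (a, b) (carets a ((a + b) / 2) l \<union> carets ((a + b) / 2) b r)"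

fun elem_carets :: "real \<Rightarrow> real \<Rightarrow> tree \<Rightarrow> (real \<times> real) set" where
  "elem_carets a b Leaf = {}"
| "elem_carets a b (Node l r) =
     (if l = Leaf \<and> r = Leaf then {(a, b)} else {}) \<union>
     elem_carets a ((a + b) / 2) l \<union> elem_carets ((a + b) / 2) b r"

fun ncarets :: "tree \<Rightarrow> nat" where
  "ncarets Leaf = 0"
| "ncarets (Node l r) = Suc (ncarets l + ncarets r)"

text \<open>A binary forest: trees indexed by the integers, tree i drawn over [i,i+1],
  all but finitely many trivial; the pointer always marks tree 0.\<close>
type_synonym forest = "int \<Rightarrow> tree"

definition is_forest :: "forest \<Rightarrow> bool" where
  "is_forest F \<longleftrightarrow> finite {i. F i \<noteq> Leaf}"

definition fleaves :: "forest \<Rightarrow> (real \<times> real) set" where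
  "fleaves F = (\<Union>i. leaves (of_int i) (of_int i + 1) (F i))"

definition fcarets :: "forest \<Rightarrow> (real \<times> real) set" where
  "fcarets F = (\<Union>i. carets (of_int i) (of_int i + 1) (F i))"

definition felem_carets :: "forest \<Rightarrow> (real \<times> real) set" where
  "felem_carets F = (\<Union>i. elem_carets (of_int i) (of_int i + 1) (F i))"

definition fncarets :: "forest \<Rightarrow> nat" where
  "fncarets F = (\<Sum>i\<in>{i. F i \<noteq> Leaf}. ncarets (F i))"

text \<open>(B,T): bottom (domain) forest B, top (range) forest T; f maps each leaf
  interval of B linearly onto a leaf interval of T.\<close>
definition forest_diagram :: "(real \<Rightarrow> real) \<Rightarrow> forest \<Rightarrow> forest \<Rightarrow> bool" where
  "forest_diagram f B T \<longleftrightarrow> is_forest B \<and> is_forest T \<and>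
     (\<forall>(a, b)\<in>fleaves B. (f a, f b) \<in> fleaves T \<and> (\<exists>s c. \<forall>t\<in>{a..b}. f t = s * t + c))"

text \<open>No opposing pair of carets: a bottom caret with two leaf children whose
  matched leaves are the two leaf children of a top caret.\<close>
definition reduced :: "(real \<Rightarrow> real) \<Rightarrow> forest \<Rightarrow> forest \<Rightarrow> bool" where
  "reduced f B T \<longleftrightarrow> \<not> (\<exists>(a, b)\<in>felem_carets B. (f a, f b) \<in> felem_carets T)"

definition reduced_diagram :: "(real \<Rightarrow> real) \<Rightarrow> forest \<times> forest" where
  "reduced_diagram f = (THE (B, T). forest_diagram f B T \<and> reduced f B T)"

definition bottom_forest :: "(real \<Rightarrow> real) \<Rightarrow> forest" where
  "bottom_forest f = fst (reduced_diagram f)"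

definition top_forest :: "(real \<Rightarrow> real) \<Rightarrow> forest" where
  "top_forest f = snd (reduced_diagram f)"

text \<open>Spaces are identified with the domain points separating consecutive columns
  (left endpoints of leaf intervals of the bottom forest); the same space sits at
  the point f p in the top forest.\<close>
definition spaces :: "forest \<Rightarrow> real set" where
  "spaces B = {a. \<exists>b. (a, b) \<in> fleaves B}"

text \<open>Support, in domain coordinates, is the interval [supp_lo, supp_hi]: the convex
  hull of the columns of nontrivial trees of either forest and of the two pointer trees.\<close>
definition supp_lo :: "(real \<Rightarrow> real) \<Rightarrow> forest \<Rightarrow> forest \<Rightarrow> real" where
  "supp_lo f B T = Min ({0, inv f 0} \<union> {of_int i | i. B i \<noteq> Leaf}
                     \<union> {inv f (of_int j) | j. T j \<noteq> Leaf})"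

definition supp_hi :: "(real \<Rightarrow> real) \<Rightarrow> forest \<Rightarrow> forest \<Rightarrow> real" where
  "supp_hi f B T = Max ({1, inv f 1} \<union> {of_int i + 1 | i. B i \<noteq> Leaf}
                     \<union> {inv f (of_int j + 1) | j. T j \<noteq> Leaf})"

definition support_spaces :: "(real \<Rightarrow> real) \<Rightarrow> forest \<Rightarrow> forest \<Rightarrow> real set" where
  "support_spaces f B T = {p \<in> spaces B. supp_lo f B T < p \<and> p < supp_hi f B T}"

definition support_columns :: "(real \<Rightarrow> real) \<Rightarrow> forest \<Rightarrow> forest \<Rightarrow> (real \<times> real) set" where
  "support_columns f B T = {(a, b) \<in> fleaves B. supp_lo f B T \<le> a \<and> b \<le> supp_hi f B T}"

definition support_size :: "(real \<Rightarrow> real) \<Rightarrow> nat" where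
  "support_size f = card (support_columns f (bottom_forest f) (top_forest f))"

datatype label = L | N | R | I

text \<open>Label of the space at point p of a forest (pointer at tree 0 = [0,1]).
  Exterior spaces are exactly those at integer points.\<close>
definition label :: "forest \<Rightarrow> real \<Rightarrow> label" where
  "label F p = (if p \<in> \<int> \<and> p \<le> 0 then L
                else if (\<exists>b. (p, b) \<in> fcarets F) then N
                else if p \<in> \<int> then R
                else I)"

fun weight :: "label \<Rightarrow> label \<Rightarrow> nat" where
  "weight L L = 2" | "weight L N = 1" | "weight L R = 1" | "weight L I = 1"
| "weight N L = 1" | "weight N N = 2" | "weight N R = 2" | "weight N I = 2"
| "weight R L = 1" | "weight R N = 2" | "weight R R = 2" | "weight R I = 0"
| "weight I L = 1" | "weight I N = 2" | "weight I R = 0" | "weight I I = 0"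

definition label_pair :: "(real \<Rightarrow> real) \<Rightarrow> real \<Rightarrow> (label \<times> label) option" where
  "label_pair f p = (if p \<in> support_spaces f (bottom_forest f) (top_forest f)
                      then Some (label (top_forest f) (f p), label (bottom_forest f) p) else None)"

definition ell0 :: "(real \<Rightarrow> real) \<Rightarrow> nat" where
  "ell0 f = (\<Sum>p\<in>support_spaces f (bottom_forest f) (top_forest f).
               weight (label (top_forest f) (f p)) (label (bottom_forest f) p))"

definition ell1 :: "(real \<Rightarrow> real) \<Rightarrow> nat" where
  "ell1 f = fncarets (top_forest f) + fncarets (bottom_forest f)"

definition ell :: "(real \<Rightarrow> real) \<Rightarrow> nat" where
  "ell f = ell0 f + ell1 f"

text \<open>Left space of f: the space immediately left of the current tree (top tree 0,
  range interval [0,1]); in domain coordinates it is at inv f 0.\<close>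
definition left_space :: "(real \<Rightarrow> real) \<Rightarrow> real" where
  "left_space f = inv f 0"

definition current_tree :: "(real \<Rightarrow> real) \<Rightarrow> tree" where
  "current_tree f = top_forest f 0"

end

theory Submission
  imports Defs
begin

lemma leaves_bounds:
  "(c, d) \<in> leaves a b t \<Longrightarrow> a < b \<Longrightarrow> a \<le> c \<and> c < d \<and> d \<le> b"
proof (induction t arbitrary: a b)
  case Leaf then show ?case by simp
next
  case (Node l r)
  from Node.prems(1) have "(c,d) \<in> leaves a ((a+b)/2) l \<or> (c,d) \<in> leaves ((a+b)/2) b r" by simp
  then show ?case
  proof
    assume "(c,d) \<in> leaves a ((a+b)/2) l"
    from Node.IH(1)[OF this] Node.prems(2) show ?thesis by simp
  next
    assume "(c,d) \<in> leaves ((a+b)/2) b r"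
    from Node.IH(2)[OF this] Node.prems(2) show ?thesis by simp
  qed
qed

lemma carets_bounds:
  "(c, d) \<in> carets a b t \<Longrightarrow> a < b \<Longrightarrow> a \<le> c \<and> c < d \<and> d \<le> b"
proof (induction t arbitrary: a b)
  case Leaf then show ?case by simp
next
  case (Node l r)
  from Node.prems(1) have "(c,d) = (a,b) \<or> (c,d) \<in> carets a ((a+b)/2) l \<or> (c,d) \<in> carets ((a+b)/2) b r" by simp
  then show ?case
  proof (elim disjE)
    assume "(c,d) \<in> carets a ((a+b)/2) l"
    from Node.IH(1)[OF this] Node.prems(2) show ?thesis by simp
  next
    assume "(c,d) \<in> carets ((a+b)/2) b r"
    from Node.IH(2)[OF this] Node.prems(2) show ?thesis by simp
  qed (use Node.prems in auto)
qed

lemma elem_carets_sub: "elem_carets a b t \<subseteq> carets a b t"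
proof (induction t arbitrary: a b)
  case (Node l r)
  have "elem_carets a ((a+b)/2) l \<subseteq> carets a ((a+b)/2) l"
       "elem_carets ((a+b)/2) b r \<subseteq> carets ((a+b)/2) b r" by (rule Node.IH)+
  then show ?case by auto
qed simp

lemma elem_carets_leaves:
  "(c, d) \<in> elem_carets a b t \<Longrightarrow> (c, (c+d)/2) \<in> leaves a b t \<and> ((c+d)/2, d) \<in> leaves a b t"
proof (induction t arbitrary: a b)
  case Leaf then show ?case by simp
next
  case (Node l r)
  show ?case
  proof (cases "l = Leaf \<and> r = Leaf \<and> (c,d) = (a,b)")
    case True then show ?thesis by simp
  next
    case False
    with Node.prems have "(c,d) \<in> elem_carets a ((a+b)/2) l \<or> (c,d) \<in> elem_carets ((a+b)/2) b r"
      by (auto split: if_splits)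
    then show ?thesis using Node.IH by auto
  qed
qed

lemma leaves_cover:
  "a \<le> x \<Longrightarrow> x < b \<Longrightarrow> \<exists>(c, d)\<in>leaves a b t. c \<le> x \<and> x < d"
proof (induction t arbitrary: a b)
  case Leaf then show ?case by simp
next
  case (Node l r)
  show ?case
  proof (cases "x < (a+b)/2")
    case True
    from Node.IH(1)[of a "(a+b)/2"] Node.prems True show ?thesis by auto
  next
    case False
    from Node.IH(2)[of "(a+b)/2" b] Node.prems False show ?thesis by auto
  qed
qed

lemma leaves_unique:
  "(c1, d1) \<in> leaves a b t \<Longrightarrow> (c2, d2) \<in> leaves a b t \<Longrightarrow> a < b \<Longrightarrow>
   c1 \<le> x \<Longrightarrow> x < d1 \<Longrightarrow> c2 \<le> x \<Longrightarrow> x < d2 \<Longrightarrow> c1 = c2 \<and> d1 = d2"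
proof (induction t arbitrary: a b)
  case Leaf then show ?case by simp
next
  case (Node l r)
  let ?m = "(a+b)/2"
  have ab: "a < ?m" "?m < b" using Node.prems by auto
  have L: "(c,d) \<in> leaves a ?m l \<Longrightarrow> d \<le> ?m" for c d using leaves_bounds[of c d a ?m l] ab by auto
  have R: "(c,d) \<in> leaves ?m b r \<Longrightarrow> ?m \<le> c" for c d using leaves_bounds[of c d ?m b r] ab by auto
  from Node.prems(1,2) have
    "((c1,d1) \<in> leaves a ?m l \<or> (c1,d1) \<in> leaves ?m b r) \<and>
     ((c2,d2) \<in> leaves a ?m l \<or> (c2,d2) \<in> leaves ?m b r)" by simp
  then show ?case
  proof (elim conjE disjE)
    assume h: "(c1,d1) \<in> leaves a ?m l" "(c2,d2) \<in> leaves a ?m l"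
    show ?thesis by (rule Node.IH(1)[OF h ab(1) Node.prems(4-7)])
  next
    assume h: "(c1,d1) \<in> leaves ?m b r" "(c2,d2) \<in> leaves ?m b r"
    show ?thesis by (rule Node.IH(2)[OF h ab(2) Node.prems(4-7)])
  next
    assume "(c1,d1) \<in> leaves a ?m l" "(c2,d2) \<in> leaves ?m b r"
    then have "d1 \<le> ?m" "?m \<le> c2" using L R by blast+
    then show ?thesis using Node.prems(4-7) by linarith
  next
    assume "(c1,d1) \<in> leaves ?m b r" "(c2,d2) \<in> leaves a ?m l"
    then have "d2 \<le> ?m" "?m \<le> c1" using L R by blast+
    then show ?thesis using Node.prems(4-7) by linarith
  qed
qed

lemma leaves_finite: "finite (leaves a b t)"
  by (induction t arbitrary: a b) auto

lemma leaves_shift: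
  "leaves (a + s) (b + s) t = (\<lambda>(x, y). (x + s, y + s)) ` leaves a b t"
proof (induction t arbitrary: a b)
  case Leaf then show ?case by simp
next
  case (Node l r)
  have m: "(a + s + (b + s)) / 2 = (a+b)/2 + s" by (simp add: field_simps)
  show ?case using Node.IH[of a "(a+b)/2"] Node.IH[of "(a+b)/2" b]
    by (simp only: leaves.simps m) (auto simp: image_Un)
qed

lemma carets_shift:
  "carets (a + s) (b + s) t = (\<lambda>(x, y). (x + s, y + s)) ` carets a b t"
proof (induction t arbitrary: a b)
  case Leaf then show ?case by simp
next
  case (Node l r)
  have m: "(a + s + (b + s)) / 2 = (a+b)/2 + s" by (simp add: field_simps)
  show ?case using Node.IH[of a "(a+b)/2"] Node.IH[of "(a+b)/2" b]
    by (simp only: carets.simps m) (auto simp: image_Un)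
qed

lemma elem_carets_shift:
  "elem_carets (a + s) (b + s) t = (\<lambda>(x, y). (x + s, y + s)) ` elem_carets a b t"
proof (induction t arbitrary: a b)
  case Leaf then show ?case by simp
next
  case (Node l r)
  have m: "(a + s + (b + s)) / 2 = (a+b)/2 + s" by (simp add: field_simps)
  show ?case using Node.IH[of a "(a+b)/2"] Node.IH[of "(a+b)/2" b]
    by (simp only: elem_carets.simps m) (auto simp: image_Un)
qed

lemma self_leaf: "a < b \<Longrightarrow> (a, b) \<in> leaves a b t \<Longrightarrow> t = Leaf"
proof (cases t)
  case (Node l r)
  assume ab: "a < b" and h: "(a, b) \<in> leaves a b t"
  let ?m = "(a+b)/2"
  from h Node have "(a,b) \<in> leaves a ?m l \<or> (a,b) \<in> leaves ?m b r" by simp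
  then show ?thesis using leaves_bounds[of a b a ?m l] leaves_bounds[of a b ?m b r] ab by auto
qed simp

lemma leaves_inj: "a < b \<Longrightarrow> leaves a b t1 = leaves a b t2 \<Longrightarrow> t1 = t2"
proof (induction t1 arbitrary: a b t2)
  case Leaf
  then have "(a,b) \<in> leaves a b t2" by (metis insertI1 leaves.simps(1))
  from self_leaf[OF Leaf.prems(1) this] show ?case by simp
next
  case (Node l r)
  let ?m = "(a+b)/2"
  have ab: "a < ?m" "?m < b" using Node.prems by auto
  show ?case
  proof (cases t2)
    case Leaf
    have "(a,b) \<in> leaves a b (Node l r)" using Node.prems(2) Leaf by simp
    from self_leaf[OF Node.prems(1) this] show ?thesis by simp
  next
    case (Node l2 r2)
    have L': "\<forall>p\<in>leaves a ?m x. snd p \<le> ?m" for x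
    proof
      fix p assume "p \<in> leaves a ?m x"
      then show "snd p \<le> ?m" using leaves_bounds[of "fst p" "snd p" a ?m x] ab(1) by simp
    qed
    have R': "\<forall>p\<in>leaves ?m b y. \<not> snd p \<le> ?m" for y
    proof
      fix p assume "p \<in> leaves ?m b y"
      then show "\<not> snd p \<le> ?m" using leaves_bounds[of "fst p" "snd p" ?m b y] ab(2) by simp
    qed
    have split1: "leaves a ?m x = {p \<in> leaves a b (tree.Node x y). snd p \<le> ?m}" for x y
      using L'[of x] R'[of y] by (simp only: leaves.simps) blast
    have split2: "leaves ?m b y = {p \<in> leaves a b (tree.Node x y). \<not> snd p \<le> ?m}" for x y
      using L'[of x] R'[of y] by (simp only: leaves.simps) blast
    have "leaves a ?m l = {p \<in> leaves a b (tree.Node l r). snd p \<le> ?m}" by (rule split1)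
    also have "\<dots> = {p \<in> leaves a b t2. snd p \<le> ?m}" by (simp only: Node.prems(2))
    also have "\<dots> = leaves a ?m l2" by (simp only: \<open>t2 = _\<close>) (rule split1[symmetric])
    finally have eq1: "leaves a ?m l = leaves a ?m l2" .
    have "leaves ?m b r = {p \<in> leaves a b (tree.Node l r). \<not> snd p \<le> ?m}" by (rule split2)
    also have "\<dots> = {p \<in> leaves a b t2. \<not> snd p \<le> ?m}" by (simp only: Node.prems(2))
    also have "\<dots> = leaves ?m b r2" by (simp only: \<open>t2 = _\<close>) (rule split2[symmetric])
    finally have eq2: "leaves ?m b r = leaves ?m b r2" .
    from eq1 eq2 show ?thesis using Node.IH(1)[OF ab(1)] Node.IH(2)[OF ab(2)] \<open>t2 = _\<close> by simp
  qed
qed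

lemma carets_of_node: "t \<noteq> Leaf \<Longrightarrow> (a, b) \<in> carets a b t"
  by (cases t) auto

lemma has_elem:
  "t \<noteq> Leaf \<Longrightarrow> a < b \<Longrightarrow> \<exists>(c, d)\<in>elem_carets a b t. a \<le> c \<and> d \<le> b"
proof (induction t arbitrary: a b)
  case Leaf then show ?case by simp
next
  case (Node l r)
  let ?m = "(a+b)/2"
  have ab: "a < ?m" "?m < b" using Node.prems by auto
  show ?case
  proof (cases "l = Leaf")
    case True
    show ?thesis
    proof (cases "r = Leaf")
      case True
      with \<open>l = Leaf\<close> show ?thesis by auto
    next
      case False
      from Node.IH(2)[OF False ab(2)] obtain c d where "(c,d) \<in> elem_carets ?m b r" "?m \<le> c" "d \<le> b" by auto
      then show ?thesis using ab by (intro bexI[of _ "(c,d)"]) auto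
    qed
  next
    case False
    from Node.IH(1)[OF False ab(1)] obtain c d where "(c,d) \<in> elem_carets a ?m l" "a \<le> c" "d \<le> ?m" by auto
    then show ?thesis using ab by (intro bexI[of _ "(c,d)"]) auto
  qed
qed

lemma caret_has_elem:
  "(c, d) \<in> carets a b t \<Longrightarrow> a < b \<Longrightarrow> \<exists>(e1, e2)\<in>elem_carets a b t. c \<le> e1 \<and> e2 \<le> d"
proof (induction t arbitrary: a b)
  case Leaf then show ?case by simp
next
  case (Node l r)
  let ?m = "(a+b)/2"
  have ab: "a < ?m" "?m < b" using Node.prems by auto
  have sub: "elem_carets a ?m l \<subseteq> elem_carets a b (Node l r)"
            "elem_carets ?m b r \<subseteq> elem_carets a b (Node l r)"
    by (simp only: elem_carets.simps; blast)+
  from Node.prems(1) have "(c,d) = (a,b) \<or> (c,d) \<in> carets a ?m l \<or> (c,d) \<in> carets ?m b r" by simp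
  then show ?case
  proof (elim disjE)
    assume cd: "(c,d) = (a,b)"
    have "Node l r \<noteq> Leaf" by simp
    from has_elem[OF this Node.prems(2)] obtain e1 e2 where
      "(e1,e2) \<in> elem_carets a b (Node l r)" "a \<le> e1" "e2 \<le> b" by blast
    then show ?thesis using cd by blast
  next
    assume "(c,d) \<in> carets a ?m l"
    from Node.IH(1)[OF this ab(1)] obtain e1 e2 where "(e1,e2) \<in> elem_carets a ?m l" "c \<le> e1" "e2 \<le> d" by blast
    then show ?thesis using sub by blast
  next
    assume "(c,d) \<in> carets ?m b r"
    from Node.IH(2)[OF this ab(2)] obtain e1 e2 where "(e1,e2) \<in> elem_carets ?m b r" "c \<le> e1" "e2 \<le> d" by blast
    then show ?thesis using sub by blast
  qed
qed


definition sd :: "real \<Rightarrow> real \<Rightarrow> bool" where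
  "sd a b \<longleftrightarrow> (\<exists>(k::int) (n::nat). a = of_int k / 2 ^ n \<and> b = (of_int k + 1) / 2 ^ n)"

lemma div_pow_less: "(x::real) / 2^n < z / 2^n \<longleftrightarrow> x < z"
  by (simp add: divide_less_cancel)

lemma scale_lt:
  fixes x y :: real and n e :: nat
  shows "x / 2^n < y / 2^(n+e) \<longleftrightarrow> x * 2^e < y"
proof -
  have "y / 2^(n+e) = (y / 2^e) / 2^n" by (simp add: power_add)
  then have "x / 2^n < y / 2^(n+e) \<longleftrightarrow> x / 2^n < (y / 2^e) / 2^n" by (simp only:)
  also have "\<dots> \<longleftrightarrow> x < y / 2^e" by (rule div_pow_less)
  also have "\<dots> \<longleftrightarrow> x * 2^e < y" by (simp add: pos_less_divide_eq)
  finally show ?thesis .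
qed

lemma scale_lt2:
  fixes x y :: real and n e :: nat
  shows "y / 2^(n+e) < x / 2^n \<longleftrightarrow> y < x * 2^e"
proof -
  have "y / 2^(n+e) = (y / 2^e) / 2^n" by (simp add: power_add)
  then have "y / 2^(n+e) < x / 2^n \<longleftrightarrow> (y / 2^e) / 2^n < x / 2^n" by (simp only:)
  also have "\<dots> \<longleftrightarrow> y / 2^e < x" by (rule div_pow_less)
  also have "\<dots> \<longleftrightarrow> y < x * 2^e" by (simp add: pos_divide_less_eq)
  finally show ?thesis .
qed

lemma scale_le:
  fixes x y :: real and n e :: nat
  shows "x / 2^n \<le> y / 2^(n+e) \<longleftrightarrow> x * 2^e \<le> y"
  using scale_lt2[of y n e x] by linarith

lemma scale_le2:
  fixes x y :: real and n e :: nat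
  shows "y / 2^(n+e) \<le> x / 2^n \<longleftrightarrow> y \<le> x * 2^e"
  using scale_lt[of x n y e] by linarith

lemma sd_nest_aux:
  fixes k1 k2 :: int and n1 n2 :: nat
  assumes "n1 \<le> n2" "of_int k1 / 2^n1 < (of_int k2 + 1) / (2::real)^n2"
    "of_int k2 / 2^n2 < (of_int k1 + 1) / (2::real)^n1"
  shows "of_int k1 / 2^n1 \<le> of_int k2 / (2::real)^n2 \<and> (of_int k2 + 1) / 2^n2 \<le> (of_int k1 + 1) / (2::real)^n1"
proof -
  obtain e where e: "n2 = n1 + e" using assms(1) le_Suc_ex by blast
  have h1: "real_of_int k1 * 2^e < of_int k2 + 1" using assms(2) unfolding e scale_lt .
  have h2: "real_of_int k2 < (of_int k1 + 1) * 2^e" using assms(3) unfolding e scale_lt2 .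
  have c1: "real_of_int (k1 * 2^e) = of_int k1 * 2^e" "real_of_int (k2 + 1) = of_int k2 + 1"
    "real_of_int ((k1 + 1) * 2^e) = (of_int k1 + 1) * 2^e" by simp_all
  have h1': "k1 * 2^e < k2 + 1" using h1 c1 of_int_less_iff by metis
  have h2': "k2 < (k1 + 1) * 2^e" using h2 c1 of_int_less_iff by metis
  have g1: "k1 * 2^e \<le> k2" using h1' by linarith
  have g2: "k2 + 1 \<le> (k1 + 1) * 2^e" using h2' by linarith
  have g1': "real_of_int k1 * 2^e \<le> of_int k2" using g1 c1 of_int_le_iff by metis
  have g2': "real_of_int k2 + 1 \<le> (of_int k1 + 1) * 2^e" using g2 c1 of_int_le_iff by metis
  show ?thesis unfolding e scale_le scale_le2 using g1' g2' by simp
qed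

lemma sd_nest:
  assumes "sd a b" "sd c d" "max a c < min b d"
  shows "(c \<le> a \<and> b \<le> d) \<or> (a \<le> c \<and> d \<le> b)"
proof -
  obtain k1 n1 where 1: "a = of_int k1 / 2 ^ n1" "b = (of_int k1 + 1) / 2 ^ n1" using assms(1) sd_def by blast
  obtain k2 n2 where 2: "c = of_int k2 / 2 ^ n2" "d = (of_int k2 + 1) / 2 ^ n2" using assms(2) sd_def by blast
  have lt: "a < d" "c < b" using assms(3) by auto
  show ?thesis
  proof (cases "n1 \<le> n2")
    case True
    from sd_nest_aux[OF True] lt 1 2 show ?thesis by auto
  next
    case False
    then have "n2 \<le> n1" by simp
    from sd_nest_aux[OF this] lt 1 2 show ?thesis by auto
  qed
qed

lemma sd_lt: "sd a b \<Longrightarrow> a < b"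
  unfolding sd_def by (auto simp: divide_strict_right_mono)

lemma sd_len: "sd a b \<Longrightarrow> b - a \<le> 1"
proof -
  assume "sd a b"
  then obtain k n where "a = of_int k / 2 ^ n" "b = (of_int k + 1) / 2 ^ n" using sd_def by blast
  then have "b - a = 1 / 2^n" by (simp add: field_simps)
  also have "\<dots> \<le> 1" by simp
  finally show ?thesis .
qed

lemma sd_unit: "sd (of_int i) (of_int i + 1)"
  unfolding sd_def by (rule exI[of _ i], rule exI[of _ 0]) simp

lemma sd_halves:
  assumes "sd a b" shows "sd a ((a+b)/2)" "sd ((a+b)/2) b"
proof -
  obtain k n where kn: "a = of_int k / 2 ^ n" "b = (of_int k + 1) / 2 ^ n" using assms sd_def by blast
  have "a = of_int (2*k) / 2^(Suc n) \<and> (a+b)/2 = (of_int (2*k) + 1) / 2^(Suc n)"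
    using kn by (simp add: field_simps)
  then show "sd a ((a+b)/2)" unfolding sd_def by blast
  have "(a+b)/2 = of_int (2*k+1) / 2^(Suc n) \<and> b = (of_int (2*k+1) + 1) / 2^(Suc n)"
    using kn by (simp add: field_simps)
  then show "sd ((a+b)/2) b" unfolding sd_def by blast
qed

lemma sd_shift:
  assumes "sd a b" shows "sd (a + of_int z) (b + of_int z)"
proof -
  obtain k n where kn: "a = of_int k / 2 ^ n" "b = (of_int k + 1) / 2 ^ n" using assms sd_def by blast
  have "a + of_int z = of_int (k + z * 2^n) / 2^n \<and> b + of_int z = (of_int (k + z * 2^n) + 1) / 2^n"
    using kn by (simp add: field_simps)
  then show ?thesis unfolding sd_def by blast
qed

lemma sd_in_unit:
  assumes "sd a b" shows "of_int \<lfloor>a\<rfloor> \<le> a \<and> b \<le> of_int \<lfloor>a\<rfloor> + 1"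
proof -
  have u: "sd (of_int \<lfloor>a\<rfloor>) (of_int \<lfloor>a\<rfloor> + 1)" by (rule sd_unit)
  have ab: "a < b" "b - a \<le> 1" using sd_lt[OF assms] sd_len[OF assms] by auto
  have "max a (of_int \<lfloor>a\<rfloor>) < min b (of_int \<lfloor>a\<rfloor> + 1)" using ab by linarith
  from sd_nest[OF assms u this] ab show ?thesis by linarith
qed

lemma sd_sub_half:
  assumes "sd a b" "sd c d" "a \<le> c" "d \<le> b" "(c, d) \<noteq> (a, b)"
  shows "d \<le> (a+b)/2 \<or> (a+b)/2 \<le> c"
proof (rule ccontr)
  assume "\<not> ?thesis"
  then have h: "c < (a+b)/2" "(a+b)/2 < d" by auto
  have cd: "c < d" using sd_lt[OF assms(2)] .
  have "max ((a+b)/2) c < min b d" using h assms(4) cd by (auto simp: max_def min_def)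
  from sd_nest[OF sd_halves(2)[OF assms(1)] assms(2) this] h have "b \<le> d" by auto
  moreover have "max a c < min ((a+b)/2) d" using h assms(3) cd by (auto simp: max_def min_def)
  from sd_nest[OF sd_halves(1)[OF assms(1)] assms(2) this] h have "c \<le> a" by auto
  ultimately show False using assms(3,4,5) by auto
qed

lemma leaves_sd: "sd a b \<Longrightarrow> (c, d) \<in> leaves a b t \<Longrightarrow> sd c d"
proof (induction t arbitrary: a b)
  case Leaf then show ?case by simp
next
  case (Node l r)
  then show ?case using sd_halves[OF Node.prems(1)] Node.IH by auto
qed

lemma carets_sd: "sd a b \<Longrightarrow> (c, d) \<in> carets a b t \<Longrightarrow> sd c d"
proof (induction t arbitrary: a b)
  case Leaf then show ?case by simp
next
  case (Node l r)
  then show ?case using sd_halves[OF Node.prems(1)] Node.IH by auto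
qed

lemma tree_anc:
  "sd u v \<Longrightarrow> (c, d) \<in> leaves u v t \<Longrightarrow> sd a b \<Longrightarrow> u \<le> a \<Longrightarrow> b \<le> v \<Longrightarrow> a \<le> c \<Longrightarrow> d \<le> b
   \<Longrightarrow> (a, b) \<noteq> (c, d) \<Longrightarrow> (a, b) \<in> carets u v t"
proof (induction t arbitrary: u v)
  case Leaf
  then have "c = u" "d = v" by auto
  then show ?case using Leaf.prems by auto
next
  case (Node l r)
  let ?m = "(u+v)/2"
  have uv: "u < ?m" "?m < v" using sd_lt[OF Node.prems(1)] by auto
  show ?case
  proof (cases "(a, b) = (u, v)")
    case True then show ?thesis by simp
  next
    case False
    have cd: "c < d" using leaves_bounds[OF Node.prems(2)] uv by auto
    have ab: "a < b" using sd_lt[OF Node.prems(3)] .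
    from sd_sub_half[OF Node.prems(1) Node.prems(3) Node.prems(4) Node.prems(5) False]
    have "b \<le> ?m \<or> ?m \<le> a" .
    then show ?thesis
    proof
      assume bm: "b \<le> ?m"
      have "(c,d) \<notin> leaves ?m v r" using leaves_bounds[of c d ?m v r] uv bm Node.prems(7) cd
        by auto
      then have "(c,d) \<in> leaves u ?m l" using Node.prems(2) by simp
      from Node.IH(1)[OF sd_halves(1)[OF Node.prems(1)] this Node.prems(3,4) bm Node.prems(6,7,8)]
      show ?thesis by simp
    next
      assume am: "?m \<le> a"
      have "(c,d) \<notin> leaves u ?m l" using leaves_bounds[of c d u ?m l] uv am Node.prems(6) cd
        by auto
      then have "(c,d) \<in> leaves ?m v r" using Node.prems(2) by simp
      from Node.IH(2)[OF sd_halves(2)[OF Node.prems(1)] this Node.prems(3) am Node.prems(5-8)]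
      show ?thesis by simp
    qed
  qed
qed

lemma tree_halves:
  "sd u v \<Longrightarrow> sd x y \<Longrightarrow> u \<le> x \<Longrightarrow> y \<le> v \<Longrightarrow> (x, (x+y)/2) \<in> leaves u v t
   \<Longrightarrow> ((x+y)/2, y) \<in> leaves u v t \<Longrightarrow> (x, y) \<in> elem_carets u v t"
proof (induction t arbitrary: u v)
  case Leaf
  then show ?case using sd_lt[OF Leaf.prems(2)] by auto
next
  case (Node l r)
  let ?m = "(u+v)/2"
  have uv: "u < ?m" "?m < v" using sd_lt[OF Node.prems(1)] by auto
  have xy: "x < y" using sd_lt[OF Node.prems(2)] .
  show ?case
  proof (cases "(x, y) = (u, v)")
    case True
    then have xu: "x = u" "y = v" by auto
    have "(u, ?m) \<notin> leaves ?m v r" using leaves_bounds[of u ?m ?m v r] uv by auto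
    then have "(u, ?m) \<in> leaves u ?m l" using Node.prems(5) xu by simp
    then have "l = Leaf" using self_leaf uv by blast
    have "(?m, v) \<notin> leaves u ?m l" using leaves_bounds[of ?m v u ?m l] uv by auto
    then have "(?m, v) \<in> leaves ?m v r" using Node.prems(6) xu by simp
    then have "r = Leaf" using self_leaf uv by blast
    show ?thesis using xu \<open>l = Leaf\<close> \<open>r = Leaf\<close> by simp
  next
    case False
    from sd_sub_half[OF Node.prems(1) Node.prems(2) Node.prems(3) Node.prems(4) False]
    have "y \<le> ?m \<or> ?m \<le> x" .
    then show ?thesis
    proof
      assume ym: "y \<le> ?m"
      have "(x, (x+y)/2) \<notin> leaves ?m v r" using leaves_bounds[of x "(x+y)/2" ?m v r] uv ym xy by auto
      then have 1: "(x, (x+y)/2) \<in> leaves u ?m l" using Node.prems(5) by simp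
      have "((x+y)/2, y) \<notin> leaves ?m v r" using leaves_bounds[of "(x+y)/2" y ?m v r] uv ym xy by auto
      then have 2: "((x+y)/2, y) \<in> leaves u ?m l" using Node.prems(6) by simp
      from Node.IH(1)[OF sd_halves(1)[OF Node.prems(1)] Node.prems(2,3) ym 1 2] show ?thesis by simp
    next
      assume mx: "?m \<le> x"
      have "(x, (x+y)/2) \<notin> leaves u ?m l" using leaves_bounds[of x "(x+y)/2" u ?m l] uv mx xy by auto
      then have 1: "(x, (x+y)/2) \<in> leaves ?m v r" using Node.prems(5) by simp
      have "((x+y)/2, y) \<notin> leaves u ?m l" using leaves_bounds[of "(x+y)/2" y u ?m l] uv mx xy by auto
      then have 2: "((x+y)/2, y) \<in> leaves ?m v r" using Node.prems(6) by simp
      from Node.IH(2)[OF sd_halves(2)[OF Node.prems(1)] Node.prems(2) mx Node.prems(4) 1 2] show ?thesis by simp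
    qed
  qed
qed

section \<open>Forest level\<close>

lemma unit_lt: "(of_int i :: real) < of_int i + 1" by simp

lemma fleaves_iff: "(c, d) \<in> fleaves F \<longleftrightarrow> (\<exists>i. (c, d) \<in> leaves (of_int i) (of_int i + 1) (F i))"
  unfolding fleaves_def by auto

lemma fcarets_iff: "(c, d) \<in> fcarets F \<longleftrightarrow> (\<exists>i. (c, d) \<in> carets (of_int i) (of_int i + 1) (F i))"
  unfolding fcarets_def by auto

lemma felem_iff: "(c, d) \<in> felem_carets F \<longleftrightarrow> (\<exists>i. (c, d) \<in> elem_carets (of_int i) (of_int i + 1) (F i))"
  unfolding felem_carets_def by auto

lemma tleaves_bounds: "(c, d) \<in> leaves (of_int i) (of_int i + 1) t \<Longrightarrow> of_int i \<le> c \<and> c < d \<and> d \<le> of_int i + 1"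
  using leaves_bounds unit_lt by blast

lemma tcarets_bounds: "(c, d) \<in> carets (of_int i) (of_int i + 1) t \<Longrightarrow> of_int i \<le> c \<and> c < d \<and> d \<le> of_int i + 1"
  using carets_bounds unit_lt by blast

lemma int_unique: "of_int i \<le> (x::real) \<Longrightarrow> x < of_int i + 1 \<Longrightarrow> of_int j \<le> x \<Longrightarrow> x < of_int j + 1 \<Longrightarrow> i = j"
proof -
  assume "of_int i \<le> x" "x < of_int i + 1" "of_int j \<le> x" "x < of_int j + 1"
  then have "of_int i < (of_int j + 1 :: real)" "of_int j < (of_int i + 1 :: real)" by linarith+
  then have "i < j + 1" "j < i + 1" by (metis of_int_1 of_int_add of_int_less_iff)+
  then show "i = j" by linarith
qed

lemma fleaves_in_tree:
  "(c, d) \<in> fleaves F \<Longrightarrow> of_int j \<le> c \<Longrightarrow> c < of_int j + 1 \<Longrightarrow> (c, d) \<in> leaves (of_int j) (of_int j + 1) (F j)"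
proof -
  assume h: "(c, d) \<in> fleaves F" "of_int j \<le> c" "c < of_int j + 1"
  then obtain i where i: "(c, d) \<in> leaves (of_int i) (of_int i + 1) (F i)" using fleaves_iff by blast
  from tleaves_bounds[OF i] have "of_int i \<le> c" "c < of_int i + 1" by auto
  with h have "i = j" using int_unique by blast
  with i show ?thesis by simp
qed

lemma fcarets_in_tree:
  "(c, d) \<in> fcarets F \<Longrightarrow> of_int j \<le> c \<Longrightarrow> c < of_int j + 1 \<Longrightarrow> (c, d) \<in> carets (of_int j) (of_int j + 1) (F j)"
proof -
  assume h: "(c, d) \<in> fcarets F" "of_int j \<le> c" "c < of_int j + 1"
  then obtain i where i: "(c, d) \<in> carets (of_int i) (of_int i + 1) (F i)" using fcarets_iff by blast
  from tcarets_bounds[OF i] have "of_int i \<le> c" "c < of_int i + 1" by auto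
  with h have "i = j" using int_unique by blast
  with i show ?thesis by simp
qed

lemma fleaves_bounds: "(c, d) \<in> fleaves F \<Longrightarrow> c < d \<and> d - c \<le> 1 \<and> of_int \<lfloor>c\<rfloor> + 1 \<ge> d"
proof -
  assume "(c, d) \<in> fleaves F"
  then obtain i where i: "(c, d) \<in> leaves (of_int i) (of_int i + 1) (F i)" using fleaves_iff by blast
  from tleaves_bounds[OF i] have b: "of_int i \<le> c" "c < d" "d \<le> of_int i + 1" by auto
  then have "\<lfloor>c\<rfloor> = i" by (simp add: floor_unique)
  with b show ?thesis by auto
qed

lemma fleaves_cover: "\<exists>(c, d)\<in>fleaves F. c \<le> x \<and> x < d"
proof -
  have "of_int \<lfloor>x\<rfloor> \<le> x" "x < of_int \<lfloor>x\<rfloor> + 1" by linarith+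
  from leaves_cover[OF this, of "F \<lfloor>x\<rfloor>"] show ?thesis unfolding fleaves_def by blast
qed

lemma fleaves_unique:
  "(c1, d1) \<in> fleaves F \<Longrightarrow> (c2, d2) \<in> fleaves F \<Longrightarrow> c1 \<le> x \<Longrightarrow> x < d1 \<Longrightarrow> c2 \<le> x \<Longrightarrow> x < d2
   \<Longrightarrow> c1 = c2 \<and> d1 = d2"
proof -
  assume h: "(c1, d1) \<in> fleaves F" "(c2, d2) \<in> fleaves F" "c1 \<le> x" "x < d1" "c2 \<le> x" "x < d2"
  have fx: "of_int \<lfloor>x\<rfloor> \<le> x" "x < of_int \<lfloor>x\<rfloor> + 1" by linarith+
  from h(1) obtain i where i: "(c1, d1) \<in> leaves (of_int i) (of_int i + 1) (F i)" using fleaves_iff by blast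
  from h(2) obtain j where j: "(c2, d2) \<in> leaves (of_int j) (of_int j + 1) (F j)" using fleaves_iff by blast
  from tleaves_bounds[OF i] h have "of_int i \<le> x" "x < of_int i + 1" by auto
  then have ii: "i = \<lfloor>x\<rfloor>" using int_unique fx by blast
  from tleaves_bounds[OF j] h have "of_int j \<le> x" "x < of_int j + 1" by auto
  then have jj: "j = \<lfloor>x\<rfloor>" using int_unique fx by blast
  show ?thesis using leaves_unique[OF i j[unfolded jj, folded ii] unit_lt h(3-6)] .
qed

lemma fleaves_nsi: "(a, b) \<in> fleaves F \<Longrightarrow> (c, d) \<in> fleaves F \<Longrightarrow> a < c \<Longrightarrow> c < b \<Longrightarrow> False"
proof -
  assume h: "(a, b) \<in> fleaves F" "(c, d) \<in> fleaves F" "a < c" "c < b"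
  have "c < d" using fleaves_bounds[OF h(2)] by simp
  from fleaves_unique[OF h(1) h(2), of c] h this show False by auto
qed

lemma fleaves_noint: "(a, b) \<in> fleaves F \<Longrightarrow> a < of_int z \<Longrightarrow> of_int z < b \<Longrightarrow> False"
proof -
  assume h: "(a, b) \<in> fleaves F" "a < of_int z" "of_int z < b"
  then obtain i where i: "(a, b) \<in> leaves (of_int i) (of_int i + 1) (F i)" using fleaves_iff by blast
  from tleaves_bounds[OF i] h have "of_int i < (of_int z::real)" "of_int z < (of_int i + 1::real)" by auto
  then have "of_int i < (of_int z::real)" "of_int z < (of_int (i + 1)::real)" by simp_all
  then have "i < z" "z < i + 1" by (simp only: of_int_less_iff)+
  then show False by linarith
qed

lemma fleaves_sd: "(c, d) \<in> fleaves F \<Longrightarrow> sd c d"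
proof -
  assume "(c, d) \<in> fleaves F"
  then obtain i where "(c, d) \<in> leaves (of_int i) (of_int i + 1) (F i)" using fleaves_iff by blast
  from leaves_sd[OF sd_unit this] show ?thesis .
qed

lemma fcarets_sd: "(c, d) \<in> fcarets F \<Longrightarrow> sd c d"
proof -
  assume "(c, d) \<in> fcarets F"
  then obtain i where "(c, d) \<in> carets (of_int i) (of_int i + 1) (F i)" using fcarets_iff by blast
  from carets_sd[OF sd_unit this] show ?thesis .
qed

lemma felem_sub: "(c, d) \<in> felem_carets F \<Longrightarrow> (c, d) \<in> fcarets F"
proof -
  assume "(c, d) \<in> felem_carets F"
  then obtain i where "(c, d) \<in> elem_carets (of_int i) (of_int i + 1) (F i)" using felem_iff by blast
  then have "(c, d) \<in> carets (of_int i) (of_int i + 1) (F i)" using elem_carets_sub by blast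
  then show ?thesis using fcarets_iff by blast
qed

lemma tree_leaves_eq:
  "leaves (of_int j) (of_int j + 1) (F j) = {(c,d) \<in> fleaves F. of_int j \<le> c \<and> c < of_int j + 1}"
proof
  show "leaves (of_int j) (of_int j + 1) (F j) \<subseteq> {(c,d) \<in> fleaves F. of_int j \<le> c \<and> c < of_int j + 1}"
  proof
    fix p assume p: "p \<in> leaves (of_int j) (of_int j + 1) (F j)"
    obtain c d where pcd: "p = (c, d)" by fastforce
    have "(c, d) \<in> fleaves F" using p pcd fleaves_iff by blast
    moreover have "of_int j \<le> c \<and> c < of_int j + 1" using tleaves_bounds[of c d j "F j"] p pcd by auto
    ultimately show "p \<in> {(c,d) \<in> fleaves F. of_int j \<le> c \<and> c < of_int j + 1}" using pcd by simp
  qed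
  show "{(c,d) \<in> fleaves F. of_int j \<le> c \<and> c < of_int j + 1} \<subseteq> leaves (of_int j) (of_int j + 1) (F j)"
    using fleaves_in_tree by blast
qed

lemma fleaves_det: "fleaves F1 = fleaves F2 \<Longrightarrow> F1 = F2"
proof
  fix j
  assume h: "fleaves F1 = fleaves F2"
  have "leaves (of_int j) (of_int j + 1) (F1 j) = leaves (of_int j) (of_int j + 1) (F2 j)"
    unfolding tree_leaves_eq h ..
  then show "F1 j = F2 j" using leaves_inj[OF unit_lt] by blast
qed

lemma felem_halves: "(x, y) \<in> felem_carets F \<Longrightarrow> (x, (x+y)/2) \<in> fleaves F \<and> ((x+y)/2, y) \<in> fleaves F"
proof -
  assume "(x, y) \<in> felem_carets F"
  then obtain i where "(x, y) \<in> elem_carets (of_int i) (of_int i + 1) (F i)" using felem_iff by blast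
  from elem_carets_leaves[OF this] show ?thesis using fleaves_iff by blast
qed

lemma felem_of_halves:
  assumes "sd x y" "(x, (x+y)/2) \<in> fleaves F" "((x+y)/2, y) \<in> fleaves F"
  shows "(x, y) \<in> felem_carets F"
proof -
  let ?j = "\<lfloor>x\<rfloor>"
  have u: "of_int ?j \<le> x" "y \<le> of_int ?j + 1" using sd_in_unit[OF assms(1)] by auto
  have xy: "x < y" using sd_lt[OF assms(1)] .
  have "of_int ?j \<le> x" "x < of_int ?j + 1" using u xy by linarith+
  from fleaves_in_tree[OF assms(2) this]
  have 1: "(x, (x+y)/2) \<in> leaves (of_int ?j) (of_int ?j + 1) (F ?j)" .
  have m1: "of_int ?j \<le> (x+y)/2" unfolding add_divide_distrib using u xy by linarith
  have m2: "(x+y)/2 < of_int ?j + 1" unfolding add_divide_distrib using u xy by linarith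
  note m = m1 m2
  from fleaves_in_tree[OF assms(3) m]
  have 2: "((x+y)/2, y) \<in> leaves (of_int ?j) (of_int ?j + 1) (F ?j)" .
  from tree_halves[OF sd_unit assms(1) u 1 2] show ?thesis using felem_iff by blast
qed

lemma fcaret_has_elem: "(c, d) \<in> fcarets F \<Longrightarrow> \<exists>(e1, e2)\<in>felem_carets F. c \<le> e1 \<and> e2 \<le> d"
proof -
  assume "(c, d) \<in> fcarets F"
  then obtain i where "(c, d) \<in> carets (of_int i) (of_int i + 1) (F i)" using fcarets_iff by blast
  from caret_has_elem[OF this unit_lt] show ?thesis using felem_iff by blast
qed

lemma fanc:
  assumes "(c, d) \<in> fleaves F" "sd a b" "a \<le> c" "d \<le> b" "(a, b) \<noteq> (c, d)"
  shows "(a, b) \<in> fcarets F"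
proof -
  let ?j = "\<lfloor>a\<rfloor>"
  have u: "of_int ?j \<le> a" "b \<le> of_int ?j + 1" using sd_in_unit[OF assms(2)] by auto
  have cd: "c < d" using fleaves_bounds[OF assms(1)] by simp
  have "of_int ?j \<le> c" "c < of_int ?j + 1" using u assms(3,4) cd by linarith+
  from fleaves_in_tree[OF assms(1) this]
  have "(c, d) \<in> leaves (of_int ?j) (of_int ?j + 1) (F ?j)" .
  from tree_anc[OF sd_unit this assms(2) u assms(3,4,5)] show ?thesis using fcarets_iff by blast
qed


definition affine_on :: "(real \<Rightarrow> real) \<Rightarrow> real \<Rightarrow> real \<Rightarrow> bool" where
  "affine_on f a b \<longleftrightarrow> (\<exists>s c. \<forall>t\<in>{a..b}. f t = s * t + c)"

definition good :: "(real \<Rightarrow> real) \<Rightarrow> real \<Rightarrow> real \<Rightarrow> bool" where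
  "good f a b \<longleftrightarrow> sd a b \<and> sd (f a) (f b) \<and> affine_on f a b"

definition MaxGood :: "(real \<Rightarrow> real) \<Rightarrow> (real \<times> real) set" where
  "MaxGood f = {(a, b). good f a b \<and> (\<forall>c d. good f c d \<and> c \<le> a \<and> b \<le> d \<longrightarrow> c = a \<and> d = b)}"

definition NSG :: "forest \<Rightarrow> (real \<Rightarrow> real) \<Rightarrow> bool" where
  "NSG F f \<longleftrightarrow> (\<forall>c d a b. (c, d) \<in> fleaves F \<and> good f a b \<and> a \<le> c \<and> d \<le> b \<longrightarrow> a = c \<and> b = d)"

lemma sd_iff: "sd a b \<longleftrightarrow> (\<exists>n. b - a = 1 / 2^n \<and> a * 2^n \<in> \<int>)"
proof
  assume "sd a b"
  then obtain k n where kn: "a = of_int k / 2 ^ n" "b = (of_int k + 1) / 2 ^ n" using sd_def by blast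
  then have "b - a = 1 / 2^n" by (simp add: field_simps)
  moreover have "a * 2^n = of_int k" using kn by simp
  ultimately show "\<exists>n. b - a = 1 / 2^n \<and> a * 2^n \<in> \<int>" by auto
next
  assume "\<exists>n. b - a = 1 / 2^n \<and> a * 2^n \<in> \<int>"
  then obtain n where n: "b - a = 1 / 2^n" "a * 2^n \<in> \<int>" by blast
  then obtain k where k: "a * 2^n = of_int k" using Ints_cases by blast
  then have "a = of_int k / 2^n" by (simp add: field_simps)
  moreover have "b = (of_int k + 1) / 2^n" using n(1) k by (simp add: field_simps)
  ultimately show "sd a b" unfolding sd_def by blast
qed

lemma affine_slope:
  fixes f :: "real \<Rightarrow> real"
  assumes "\<forall>t\<in>{a..b}. f t = s * t + c" "a \<le> x" "x \<le> b" "a \<le> y" "y \<le> b"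
  shows "f y - f x = s * (y - x)"
proof -
  have "f y = s * y + c" "f x = s * x + c" using assms by auto
  then show ?thesis by (simp add: right_diff_distrib)
qed

lemma sd_affine_sub:
  assumes ab: "sd a b" and fab: "sd (f a) (f b)" and af: "affine_on f a b"
    and cd: "sd c d" and le: "a \<le> c" "d \<le> b"
  shows "sd (f c) (f d)"
proof -
  obtain n where n: "b - a = 1 / 2^n" "a * 2^n \<in> \<int>" using ab sd_iff by blast
  obtain M where M: "f b - f a = 1 / 2^M" "f a * 2^M \<in> \<int>" using fab sd_iff by blast
  obtain n' where n': "d - c = 1 / 2^n'" "c * 2^n' \<in> \<int>" using cd sd_iff by blast
  obtain s c0 where sc: "\<forall>t\<in>{a..b}. f t = s * t + c0" using af affine_on_def by blast
  have cdlt: "c < d" using sd_lt[OF cd] .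
  have abs: "f b - f a = s * (b - a)" using affine_slope[OF sc] sd_lt[OF ab] by simp
  have s: "s = 2^n / 2^M" using abs n(1) M(1) by (simp add: field_simps)
  have "(1::real) / 2^n' \<le> 1 / 2^n" using n(1) n'(1) le by linarith
  then have "(2::real)^n \<le> 2^n'" by (simp add: field_simps)
  then have "n \<le> n'" by (rule power_le_imp_le_exp[rotated]) simp
  then obtain e where e: "n' = n + e" using le_Suc_ex by blast
  have fdc: "f d - f c = s * (d - c)" using affine_slope[OF sc] le cdlt by simp
  have len: "f d - f c = 1 / 2^(M + e)" unfolding fdc s n'(1) e by (simp add: power_add)
  have fca: "f c - f a = s * (c - a)" using affine_slope[OF sc] le cdlt by simp
  have "f c * 2^(M+e) = (f a * 2^M) * 2^e + (c * 2^n') - (a * 2^n) * 2^e"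
  proof -
    have "f c = f a + s * (c - a)" using fca by simp
    then have "f c * 2^(M+e) = f a * 2^M * 2^e + (2^n / 2^M) * (c - a) * (2^M * 2^e)"
      unfolding s by (simp add: power_add algebra_simps)
    also have "\<dots> = f a * 2^M * 2^e + c * (2^n * 2^e) - a * 2^n * 2^e"
      by (simp add: field_simps)
    finally show ?thesis unfolding e by (simp add: power_add)
  qed
  moreover have "(f a * 2^M) * 2^e + (c * 2^n') - (a * 2^n) * 2^e \<in> \<int>"
  proof -
    have p2: "(2::real)^e \<in> \<int>" by (intro Ints_power) simp
    have "(f a * 2^M) * 2^e \<in> \<int>" by (rule Ints_mult[OF M(2) p2])
    moreover have "(a * 2^n) * 2^e \<in> \<int>" by (rule Ints_mult[OF n(2) p2])
    ultimately show ?thesis using n'(2) by (intro Ints_diff Ints_add) auto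
  qed
  ultimately show ?thesis using len sd_iff by auto
qed

lemma affine_sub: "affine_on f a b \<Longrightarrow> a \<le> c \<Longrightarrow> d \<le> b \<Longrightarrow> affine_on f c d"
  unfolding affine_on_def by (meson atLeastAtMost_iff order_trans)

lemma good_sub: "good f a b \<Longrightarrow> sd c d \<Longrightarrow> a \<le> c \<Longrightarrow> d \<le> b \<Longrightarrow> good f c d"
  unfolding good_def using sd_affine_sub affine_sub by blast

lemma good_lt: "good f a b \<Longrightarrow> a < b \<and> f a < f b"
  unfolding good_def using sd_lt by blast

lemma strict_mono_inv:
  fixes f :: "real \<Rightarrow> real"
  assumes "strict_mono f" "surj f"
  shows "strict_mono (inv f)"
proof (rule strict_monoI)
  fix x y :: real assume "x < y"
  show "inv f x < inv f y"
  proof (rule ccontr)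
    assume "\<not> inv f x < inv f y"
    then have "inv f y \<le> inv f x" by simp
    then have "f (inv f y) \<le> f (inv f x)" using strict_mono_mono[OF assms(1)] monoD by blast
    then show False using \<open>x < y\<close> surj_f_inv_f[OF assms(2)] by simp
  qed
qed

lemma good_inv:
  assumes sm: "strict_mono f" and su: "surj f" and g: "good f a b"
  shows "good (inv f) (f a) (f b)"
proof -
  have inj: "inj f" using sm strict_mono_imp_inj_on by blast
  have ga: "inv f (f a) = a" "inv f (f b) = b" using inv_f_f[OF inj] by auto
  obtain s c where sc: "\<forall>t\<in>{a..b}. f t = s * t + c" using g good_def affine_on_def by blast
  have lt: "a < b" "f a < f b" using good_lt[OF g] by auto
  have "f b - f a = s * (b - a)" using affine_slope[OF sc] lt by simp
  then have spos: "s > 0" using lt by (metis diff_gt_0_iff_gt zero_less_mult_pos2)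
  have "\<forall>y\<in>{f a..f b}. inv f y = (1/s) * y + (- c / s)"
  proof
    fix y assume y: "y \<in> {f a..f b}"
    have fy: "f (inv f y) = y" using surj_f_inv_f[OF su] by simp
    have "a \<le> inv f y"
    proof (rule ccontr)
      assume "\<not> a \<le> inv f y"
      then have "f (inv f y) < f a" using sm strict_monoD by (metis not_le)
      then show False using y fy by simp
    qed
    moreover have "inv f y \<le> b"
    proof (rule ccontr)
      assume "\<not> inv f y \<le> b"
      then have "f b < f (inv f y)" using sm strict_monoD by (metis not_le)
      then show False using y fy by simp
    qed
    ultimately have "y = s * inv f y + c" using sc fy by auto
    then show "inv f y = (1/s) * y + (- c / s)" using spos by (simp add: field_simps)
  qed
  then have "affine_on (inv f) (f a) (f b)" unfolding affine_on_def by blast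
  then show ?thesis using g ga unfolding good_def by simp
qed

lemma maxgood_char:
  assumes leaves_good: "\<forall>(c, d)\<in>fleaves F. good f c d" and nsg: "NSG F f"
  shows "fleaves F = MaxGood f"
proof
  show "fleaves F \<subseteq> MaxGood f"
  proof
    fix p assume p: "p \<in> fleaves F"
    obtain c d where pcd: "p = (c, d)" by fastforce
    have "good f c d" using leaves_good p pcd by auto
    moreover have "\<forall>a b. good f a b \<and> a \<le> c \<and> d \<le> b \<longrightarrow> a = c \<and> b = d"
      using nsg p pcd unfolding NSG_def by blast
    ultimately show "p \<in> MaxGood f" unfolding MaxGood_def pcd by blast
  qed
  show "MaxGood f \<subseteq> fleaves F"
  proof
    fix p assume p: "p \<in> MaxGood f"
    obtain a b where pab: "p = (a, b)" by fastforce
    have gab: "good f a b" and mx: "\<forall>c d. good f c d \<and> c \<le> a \<and> b \<le> d \<longrightarrow> c = a \<and> d = b"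
      using p pab unfolding MaxGood_def by auto
    obtain c d where cd: "(c, d) \<in> fleaves F" "c \<le> a" "a < d" using fleaves_cover[of F a] by blast
    have ab: "a < b" using good_lt[OF gab] by simp
    have "max a c < min b d" using cd ab by simp
    from sd_nest[OF fleaves_sd[OF cd(1)] conjunct1[OF gab[unfolded good_def]] ] this
    have "(a \<le> c \<and> d \<le> b) \<or> (c \<le> a \<and> b \<le> d)"
      by (metis max.commute min.commute sd_nest fleaves_sd[OF cd(1)] conjunct1[OF gab[unfolded good_def]])
    then show "p \<in> fleaves F"
    proof
      assume "a \<le> c \<and> d \<le> b"
      then have "a = c \<and> b = d" using nsg cd(1) gab unfolding NSG_def by blast
      then show ?thesis using cd(1) pab by simp
    next
      assume h: "c \<le> a \<and> b \<le> d"
      have "good f c d" using leaves_good cd(1) by auto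
      then have "c = a \<and> d = b" using mx h by blast
      then show ?thesis using cd(1) pab by simp
    qed
  qed
qed

lemma affine_mid:
  assumes "affine_on f a b" "a \<le> x" "y \<le> b" "x \<le> y"
  shows "f ((x+y)/2) = (f x + f y)/2"
proof -
  obtain s c where sc: "\<forall>t\<in>{a..b}. f t = s * t + c" using assms(1) affine_on_def by blast
  have "(x+y)/2 \<in> {a..b}" "x \<in> {a..b}" "y \<in> {a..b}" using assms(2-4) by auto
  then show ?thesis using sc by (simp add: field_simps)
qed

lemma diagram_leaves_good:
  assumes "forest_diagram f B T" "(c, d) \<in> fleaves B"
  shows "good f c d"
proof -
  have "(f c, f d) \<in> fleaves T" "\<exists>s c0. \<forall>t\<in>{c..d}. f t = s * t + c0"
    using assms unfolding forest_diagram_def by auto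
  then show ?thesis unfolding good_def affine_on_def using fleaves_sd assms(2) by blast
qed

lemma reduced_NSG:
  assumes fd: "forest_diagram f B T" and red: "reduced f B T"
  shows "NSG B f"
  unfolding NSG_def
proof (intro allI impI)
  fix c d a b
  assume h: "(c, d) \<in> fleaves B \<and> good f a b \<and> a \<le> c \<and> d \<le> b"
  show "a = c \<and> b = d"
  proof (rule ccontr)
    assume ne: "\<not> (a = c \<and> b = d)"
    have gab: "good f a b" using h by simp
    have "(a, b) \<in> fcarets B" using fanc[of c d B a b] h ne gab unfolding good_def by auto
    from fcaret_has_elem[OF this] obtain e1 e2 where e: "(e1, e2) \<in> felem_carets B" "a \<le> e1" "e2 \<le> b"
      by blast
    let ?m = "(e1 + e2) / 2"
    have hv: "(e1, ?m) \<in> fleaves B" "(?m, e2) \<in> fleaves B" using felem_halves[OF e(1)] by auto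
    have sde: "sd e1 e2" using fcarets_sd[OF felem_sub[OF e(1)]] .
    have e12: "e1 < e2" using sd_lt[OF sde] .
    have th: "(f e1, f ?m) \<in> fleaves T" "(f ?m, f e2) \<in> fleaves T" using hv fd unfolding forest_diagram_def by auto
    have afab: "affine_on f a b" using gab good_def by blast
    have fm: "f ?m = (f e1 + f e2) / 2" using affine_mid[OF afab e(2) e(3)] e12 by simp
    have sdf: "sd (f e1) (f e2)" using sd_affine_sub[OF _ _ afab sde e(2,3)] gab good_def by blast
    have "(f e1, f e2) \<in> felem_carets T" using felem_of_halves[OF sdf] th fm by simp
    then show False using red e(1) unfolding reduced_def by blast
  qed
qed

lemma reduced_leaves:
  assumes "forest_diagram f B T" "reduced f B T"
  shows "fleaves B = MaxGood f"
  using maxgood_char[OF _ reduced_NSG[OF assms]] diagram_leaves_good[OF assms(1)] by blast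

lemma top_leaves:
  assumes sm: "strict_mono f" and su: "surj f" and fd: "forest_diagram f B T"
  shows "fleaves T = (\<lambda>(a, b). (f a, f b)) ` fleaves B"
proof
  show "(\<lambda>(a, b). (f a, f b)) ` fleaves B \<subseteq> fleaves T" using fd unfolding forest_diagram_def by auto
  show "fleaves T \<subseteq> (\<lambda>(a, b). (f a, f b)) ` fleaves B"
  proof
    fix p assume p: "p \<in> fleaves T"
    obtain c d where pcd: "p = (c, d)" by fastforce
    let ?x = "inv f c"
    have fx: "f ?x = c" using surj_f_inv_f[OF su] by simp
    obtain a b where ab: "(a, b) \<in> fleaves B" "a \<le> ?x" "?x < b" using fleaves_cover[of B ?x] by blast
    have fab: "(f a, f b) \<in> fleaves T" using fd ab(1) unfolding forest_diagram_def by auto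
    have "f a \<le> c" using strict_mono_mono[OF sm] ab(2) fx monoD by metis
    moreover have "c < f b" using sm ab(3) fx strict_monoD by metis
    moreover have "c < d" using fleaves_bounds p pcd by blast
    ultimately have "f a = c \<and> f b = d" using fleaves_unique[OF fab p[unfolded pcd], of c] by simp
    then show "p \<in> (\<lambda>(a, b). (f a, f b)) ` fleaves B" using ab(1) pcd by force
  qed
qed

lemma diagram_unique:
  assumes sm: "strict_mono f" and su: "surj f"
    and d1: "forest_diagram f B1 T1" "reduced f B1 T1"
    and d2: "forest_diagram f B2 T2" "reduced f B2 T2"
  shows "B1 = B2 \<and> T1 = T2"
proof -
  have "fleaves B1 = fleaves B2" using reduced_leaves[OF d1] reduced_leaves[OF d2] by simp
  moreover then have "fleaves T1 = fleaves T2" using top_leaves[OF sm su d1(1)] top_leaves[OF sm su d2(1)] by simp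
  ultimately show ?thesis using fleaves_det by blast
qed


fun gtree :: "(real \<Rightarrow> real) \<Rightarrow> nat \<Rightarrow> real \<Rightarrow> real \<Rightarrow> tree" where
  "gtree f 0 a b = Leaf"
| "gtree f (Suc n) a b = (if good f a b then Leaf else Node (gtree f n a ((a+b)/2)) (gtree f n ((a+b)/2) b))"

definition ok :: "(real \<Rightarrow> real) \<Rightarrow> nat \<Rightarrow> bool" where
  "ok f Nf \<longleftrightarrow> (\<forall>k::int. good f (of_int k / 2^Nf) ((of_int k + 1) / 2^Nf))"

definition endgood :: "(real \<Rightarrow> real) \<Rightarrow> bool" where
  "endgood f \<longleftrightarrow> (\<exists>M::int. \<forall>i. (i \<ge> M \<or> i \<le> -M) \<longrightarrow> good f (of_int i) (of_int i + 1))"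

definition Bg :: "(real \<Rightarrow> real) \<Rightarrow> nat \<Rightarrow> forest" where
  "Bg f Nf = (\<lambda>i. gtree f Nf (of_int i) (of_int i + 1))"

lemma gtree_carets: "(c, d) \<in> carets a b (gtree f n a b) \<Longrightarrow> \<not> good f c d"
proof (induction n arbitrary: a b)
  case 0 then show ?case by simp
next
  case (Suc n)
  show ?case
  proof (cases "good f a b")
    case True then show ?thesis using Suc.prems by simp
  next
    case False
    then have "(c, d) = (a, b) \<or> (c, d) \<in> carets a ((a+b)/2) (gtree f n a ((a+b)/2))
               \<or> (c, d) \<in> carets ((a+b)/2) b (gtree f n ((a+b)/2) b)" using Suc.prems by simp
    then show ?thesis using Suc.IH False by blast
  qed
qed

lemma half_forms:
  fixes k :: int and m :: nat
  shows "(of_int k / 2^m :: real) = of_int (2*k) / 2^(Suc m)"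
    "((of_int k / 2^m + (of_int k + 1) / 2^m) / 2 :: real) = (of_int (2*k) + 1) / 2^(Suc m)"
    "((of_int k / 2^m + (of_int k + 1) / 2^m) / 2 :: real) = of_int (2*k+1) / 2^(Suc m)"
    "((of_int k + 1) / 2^m :: real) = (of_int (2*k+1) + 1) / 2^(Suc m)"
  by (simp_all add: field_simps)

lemma gtree_leaves:
  "ok f (m + n) \<Longrightarrow> (c, d) \<in> leaves (of_int k / 2^m) ((of_int k + 1) / 2^m) (gtree f n (of_int k / 2^m) ((of_int k + 1) / 2^m))
   \<Longrightarrow> good f c d"
proof (induction n arbitrary: k m)
  case 0
  then have "c = of_int k / 2^m" "d = (of_int k + 1) / 2^m" by simp_all
  moreover have "good f (of_int k / 2^m) ((of_int k + 1) / 2^m)" using 0 unfolding ok_def by simp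
  ultimately show ?case by simp
next
  case (Suc n)
  let ?a = "of_int k / 2^m :: real" and ?b = "(of_int k + 1) / 2^m :: real"
  show ?case
  proof (cases "good f ?a ?b")
    case True then show ?thesis using Suc.prems by simp
  next
    case False
    have okk: "ok f (Suc m + n)" using Suc.prems(1) by simp
    have "gtree f (Suc n) ?a ?b = Node (gtree f n ?a ((?a + ?b)/2)) (gtree f n ((?a + ?b)/2) ?b)"
      using False by (simp only: gtree.simps if_False)
    then have "(c, d) \<in> leaves ?a ((?a + ?b)/2) (gtree f n ?a ((?a + ?b)/2))
        \<or> (c, d) \<in> leaves ((?a + ?b)/2) ?b (gtree f n ((?a + ?b)/2) ?b)"
      using Suc.prems(2) by (simp only: leaves.simps Un_iff)
    then show ?thesis
    proof
      assume "(c, d) \<in> leaves ?a ((?a + ?b)/2) (gtree f n ?a ((?a + ?b)/2))"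
      then have "(c, d) \<in> leaves (of_int (2*k) / 2^(Suc m)) ((of_int (2*k) + 1) / 2^(Suc m))
                  (gtree f n (of_int (2*k) / 2^(Suc m)) ((of_int (2*k) + 1) / 2^(Suc m)))"
        using half_forms(1,2)[of k m] by metis
      from Suc.IH[OF okk this] show ?thesis .
    next
      assume "(c, d) \<in> leaves ((?a + ?b)/2) ?b (gtree f n ((?a + ?b)/2) ?b)"
      then have "(c, d) \<in> leaves (of_int (2*k+1) / 2^(Suc m)) ((of_int (2*k+1) + 1) / 2^(Suc m))
                  (gtree f n (of_int (2*k+1) / 2^(Suc m)) ((of_int (2*k+1) + 1) / 2^(Suc m)))"
        using half_forms(3,4)[of k m] by metis
      from Suc.IH[OF okk this] show ?thesis .
    qed
  qed
qed

lemma Bg_leaves_good: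
  assumes "ok f Nf" "(c, d) \<in> fleaves (Bg f Nf)"
  shows "good f c d"
proof -
  from assms(2) obtain i where "(c, d) \<in> leaves (of_int i) (of_int i + 1) (gtree f Nf (of_int i) (of_int i + 1))"
    unfolding fleaves_def Bg_def by blast
  then have "(c, d) \<in> leaves (of_int i / 2^0) ((of_int i + 1) / 2^0) (gtree f Nf (of_int i / 2^0) ((of_int i + 1) / 2^0))"
    by simp
  from gtree_leaves[of f 0 Nf, OF _ this] assms(1) show ?thesis by simp
qed

lemma Bg_NSG: "NSG (Bg f Nf) f"
  unfolding NSG_def
proof (intro allI impI)
  fix c d a b
  assume h: "(c, d) \<in> fleaves (Bg f Nf) \<and> good f a b \<and> a \<le> c \<and> d \<le> b"
  show "a = c \<and> b = d"
  proof (rule ccontr)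
    assume ne: "\<not> (a = c \<and> b = d)"
    have "(a, b) \<in> fcarets (Bg f Nf)" using fanc[of c d "Bg f Nf" a b] h ne unfolding good_def by auto
    then obtain i where "(a, b) \<in> carets (of_int i) (of_int i + 1) (gtree f Nf (of_int i) (of_int i + 1))"
      unfolding fcarets_def Bg_def by blast
    from gtree_carets[OF this] h show False by simp
  qed
qed

lemma Bg_fcarets_notgood: "(a, b) \<in> fcarets (Bg f Nf) \<Longrightarrow> \<not> good f a b"
  unfolding fcarets_def Bg_def using gtree_carets by blast

lemma Bg_maxgood: "ok f Nf \<Longrightarrow> fleaves (Bg f Nf) = MaxGood f"
  using maxgood_char[OF _ Bg_NSG] Bg_leaves_good by blast

lemma Bg_forest:
  assumes "endgood f" shows "is_forest (Bg f Nf)"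
proof -
  obtain M where M: "\<forall>i. (i \<ge> M \<or> i \<le> -M) \<longrightarrow> good f (of_int i) (of_int i + 1)"
    using assms endgood_def by blast
  have "{i. Bg f Nf i \<noteq> Leaf} \<subseteq> {-M..M}"
  proof
    fix i assume "i \<in> {i. Bg f Nf i \<noteq> Leaf}"
    then have ne: "gtree f Nf (of_int i) (of_int i + 1) \<noteq> Leaf" unfolding Bg_def by simp
    have "\<not> good f (of_int i) (of_int i + 1)"
    proof
      assume "good f (of_int i) (of_int i + 1)"
      with ne show False by (cases Nf) simp_all
    qed
    with M have "\<not> (i \<ge> M \<or> i \<le> -M)" by blast
    then show "i \<in> {-M..M}" by simp
  qed
  then show ?thesis unfolding is_forest_def using finite_subset by blast
qed

lemma affine_join:
  assumes a1: "affine_on f a m" and a2: "affine_on f m b" and mm: "m = (a+b)/2" and ab: "a < b"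
    and fm: "f m = (f a + f b)/2"
  shows "affine_on f a b"
proof -
  obtain s1 c1 where 1: "\<forall>t\<in>{a..m}. f t = s1 * t + c1" using a1 affine_on_def by blast
  obtain s2 c2 where 2: "\<forall>t\<in>{m..b}. f t = s2 * t + c2" using a2 affine_on_def by blast
  have am: "a < m" "m < b" using mm ab by auto
  have e1: "f m - f a = s1 * (m - a)" using affine_slope[OF 1] am by simp
  have e2: "f b - f m = s2 * (b - m)" using affine_slope[OF 2] am by simp
  have "m - a = b - m" using mm by simp
  moreover have "f m - f a = f b - f m" using fm by simp
  ultimately have "s1 * (m - a) = s2 * (m - a)" using e1 e2 by simp
  then have s: "s1 = s2" using am by simp
  have "f m = s1 * m + c1" using 1 am by simp
  moreover have "f m = s2 * m + c2" using 2 am by simp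
  ultimately have c: "c1 = c2" using s by simp
  have "\<forall>t\<in>{a..b}. f t = s1 * t + c1"
  proof
    fix t assume t: "t \<in> {a..b}"
    show "f t = s1 * t + c1"
    proof (cases "t \<le> m")
      case True then show ?thesis using 1 t by auto
    next
      case False then show ?thesis using 2 t s c by auto
    qed
  qed
  then show ?thesis unfolding affine_on_def by blast
qed

lemma maxgood_image:
  fixes f :: "real \<Rightarrow> real"
  assumes sm: "strict_mono f" and su: "surj f" and p: "(a, b) \<in> MaxGood f"
  shows "(f a, f b) \<in> MaxGood (inv f)"
proof -
  let ?g = "inv f"
  have inj: "inj f" using sm strict_mono_imp_inj_on by blast
  have bij: "bij f" using inj su bij_def by blast
  have smg: "strict_mono ?g" using strict_mono_inv[OF sm su] .
  have sug: "surj ?g" using bij bij_betw_inv_into bij_is_surj by blast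
  have ig: "inv ?g = f" using inv_inv_eq[OF bij] .
  have gab: "good f a b" and mx: "\<forall>c d. good f c d \<and> c \<le> a \<and> b \<le> d \<longrightarrow> c = a \<and> d = b"
    using p unfolding MaxGood_def by auto
  have "good ?g (f a) (f b)" using good_inv[OF sm su gab] .
  moreover have "\<forall>c d. good ?g c d \<and> c \<le> f a \<and> f b \<le> d \<longrightarrow> c = f a \<and> d = f b"
  proof (intro allI impI)
    fix c d assume h: "good ?g c d \<and> c \<le> f a \<and> f b \<le> d"
    have "good f (?g c) (?g d)" using good_inv[OF smg sug, of c d] h ig by simp
    moreover have "?g c \<le> a" using h strict_mono_mono[OF smg] monoD inv_f_f[OF inj] by metis
    moreover have "b \<le> ?g d" using h strict_mono_mono[OF smg] monoD inv_f_f[OF inj] by metis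
    ultimately have "?g c = a \<and> ?g d = b" using mx by blast
    then show "c = f a \<and> d = f b" using surj_f_inv_f[OF su] by metis
  qed
  ultimately show ?thesis unfolding MaxGood_def by blast
qed

theorem diagram_exists:
  fixes f :: "real \<Rightarrow> real"
  assumes sm: "strict_mono f" and su: "surj f"
    and okf: "ok f Nf" and okg: "ok (inv f) Ng" and ef: "endgood f" and eg: "endgood (inv f)"
  shows "forest_diagram f (Bg f Nf) (Bg (inv f) Ng) \<and> reduced f (Bg f Nf) (Bg (inv f) Ng)"
proof -
  let ?B = "Bg f Nf" and ?T = "Bg (inv f) Ng"
  have LB: "fleaves ?B = MaxGood f" using Bg_maxgood[OF okf] .
  have LT: "fleaves ?T = MaxGood (inv f)" using Bg_maxgood[OF okg] .
  have fd: "forest_diagram f ?B ?T"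
    unfolding forest_diagram_def
  proof (intro conjI Bg_forest ef eg ballI)
    fix p assume p: "p \<in> fleaves ?B"
    obtain a b where pab: "p = (a, b)" by fastforce
    have "(f a, f b) \<in> fleaves ?T" using maxgood_image[OF sm su] p pab LB LT by simp
    moreover have "\<exists>s c. \<forall>t\<in>{a..b}. f t = s * t + c"
      using Bg_leaves_good[OF okf] p pab unfolding good_def affine_on_def by blast
    ultimately show "case p of (a, b) \<Rightarrow> (f a, f b) \<in> fleaves ?T \<and> (\<exists>s c. \<forall>t\<in>{a..b}. f t = s * t + c)"
      using pab by simp
  qed
  have red: "reduced f ?B ?T"
    unfolding reduced_def
  proof
    assume "\<exists>(a, b)\<in>felem_carets ?B. (f a, f b) \<in> felem_carets ?T"
    then obtain e1 e2 where e: "(e1, e2) \<in> felem_carets ?B" "(f e1, f e2) \<in> felem_carets ?T" by blast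
    let ?m = "(e1 + e2) / 2"
    have hv: "(e1, ?m) \<in> fleaves ?B" "(?m, e2) \<in> fleaves ?B" using felem_halves[OF e(1)] by auto
    have g1: "good f e1 ?m" "good f ?m e2" using Bg_leaves_good[OF okf] hv by auto
    have th: "(f e1, f ?m) \<in> fleaves ?T" using fd hv unfolding forest_diagram_def by auto
    have th2: "(f e1, (f e1 + f e2)/2) \<in> fleaves ?T" using felem_halves[OF e(2)] by auto
    have sdT: "sd (f e1) (f e2)" using fcarets_sd[OF felem_sub[OF e(2)]] .
    have sdB: "sd e1 e2" using fcarets_sd[OF felem_sub[OF e(1)]] .
    have lt1: "f e1 < f ?m" using good_lt[OF g1(1)] by simp
    have lt2: "f e1 < (f e1 + f e2)/2" using sd_lt[OF sdT] by simp
    have fm: "f ?m = (f e1 + f e2)/2" using fleaves_unique[OF th th2, of "f e1"] lt1 lt2 by simp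
    have "affine_on f e1 e2"
      using affine_join[of f e1 ?m e2] g1 fm sd_lt[OF sdB] unfolding good_def by simp
    then have "good f e1 e2" using sdT sdB unfolding good_def by simp
    moreover have "(e1, e2) \<in> fcarets ?B" using felem_sub[OF e(1)] .
    ultimately show False using Bg_fcarets_notgood by blast
  qed
  show ?thesis using fd red by simp
qed


definition PLD :: "(real \<Rightarrow> real) \<Rightarrow> bool" where
  "PLD f \<longleftrightarrow> strict_mono f \<and>
     (\<exists>P. finite P \<and> (\<forall>x\<in>P. dyadic x) \<and>
        (\<forall>a b. a < b \<and> {a<..<b} \<inter> P = {} \<longrightarrow> (\<exists>k::int. \<exists>c. \<forall>t\<in>{a..b}. f t = 2 powi k * t + c))) \<and>
     (\<exists>m::int. \<exists>a. \<forall>t\<le>a. f t = t - of_int m) \<and> (\<exists>n::int. \<exists>b. \<forall>t\<ge>b. f t = t - of_int n)"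

lemma dyn_mono: "x * 2^E \<in> \<int> \<Longrightarrow> E \<le> E' \<Longrightarrow> (x::real) * 2^E' \<in> \<int>"
proof -
  assume h: "x * 2^E \<in> \<int>" "E \<le> E'"
  then obtain e where e: "E' = E + e" using le_Suc_ex by blast
  have "x * 2^E' = (x * 2^E) * 2^e" unfolding e by (simp add: power_add)
  moreover have "(2::real)^e \<in> \<int>" by (intro Ints_power) simp
  ultimately show ?thesis using h(1) Ints_mult by metis
qed

lemma dyadic_bound:
  assumes "finite P" "\<forall>x\<in>P. dyadic x"
  shows "\<exists>E. \<forall>x\<in>P. x * 2^E \<in> \<int>"
  using assms
proof (induction P rule: finite_induct)
  case empty then show ?case by simp
next
  case (insert x P)
  then obtain E where E: "\<forall>y\<in>P. y * 2^E \<in> \<int>" by auto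
  from insert.prems obtain k n where kn: "x = of_int k / 2^n" unfolding dyadic_def by auto
  have xn: "x * 2^n \<in> \<int>" using kn by simp
  have "\<forall>y\<in>insert x P. y * 2^(max E n) \<in> \<int>"
    using E xn dyn_mono[of _ E "max E n"] dyn_mono[of x n "max E n"] by auto
  then show ?case by blast
qed

lemma finite_bound:
  assumes "finite S" "\<forall>z\<in>S. \<exists>k::int. Q z k"
  shows "\<exists>lo hi. \<forall>z\<in>S. \<exists>k. lo \<le> k \<and> k \<le> hi \<and> Q z k"
  using assms
proof (induction S rule: finite_induct)
  case empty then show ?case by simp
next
  case (insert x S)
  then obtain lo hi where lh: "\<forall>z\<in>S. \<exists>k. lo \<le> k \<and> k \<le> hi \<and> Q z k" by auto
  from insert.prems obtain k0 where k0: "Q x k0" by auto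
  have "\<forall>z\<in>insert x S. \<exists>k. min lo k0 \<le> k \<and> k \<le> max hi k0 \<and> Q z k"
  proof
    fix z assume z: "z \<in> insert x S"
    show "\<exists>k. min lo k0 \<le> k \<and> k \<le> max hi k0 \<and> Q z k"
    proof (cases "z = x")
      case True then show ?thesis using k0 by (intro exI[of _ k0]) (simp add: min_le_iff_disj le_max_iff_disj)
    next
      case False
      then obtain k where "lo \<le> k" "k \<le> hi" "Q z k" using z lh by auto
      then show ?thesis by (intro exI[of _ k]) (simp add: min_le_iff_disj le_max_iff_disj)
    qed
  qed
  then show ?case by blast
qed

lemma powi_nat:
  assumes "- int Lz \<le> k"
  shows "(2::real) powi k = 2^(nat (k + int Lz)) / 2^Lz"
proof -
  have "(2::real) powi k = 2 powi ((k + int Lz) - int Lz)" by simp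
  also have "\<dots> = 2 powi (k + int Lz) / 2 powi (int Lz)" by (rule power_int_diff) simp
  also have "2 powi (k + int Lz) = (2::real) powi (int (nat (k + int Lz)))" using assms by simp
  also have "\<dots> = 2 ^ nat (k + int Lz)" by (rule power_int_of_nat)
  finally show ?thesis by simp
qed

lemma open_to_closed:
  fixes f :: "real \<Rightarrow> real"
  assumes cont: "continuous_on UNIV f" and ab: "a < b" and h: "\<forall>t\<in>{a<..<b}. f t = s * t + c"
  shows "\<forall>t\<in>{a..b}. f t = s * t + c"
proof -
  have ic: "isCont f x" for x using cont continuous_on_eq_continuous_at by blast
  have lin: "((\<lambda>t. s * t + c) \<longlongrightarrow> s * x + c) (at x within S)" for x S
    by (intro tendsto_intros tendsto_ident_at)
  have ev1: "eventually (\<lambda>t. s * t + c = f t) (at_right a)"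
    using eventually_at_right_real[OF ab] by eventually_elim (use h in auto)
  have ev2: "eventually (\<lambda>t. s * t + c = f t) (at_left b)"
    using eventually_at_left_real[OF ab] by eventually_elim (use h in auto)
  have "(f \<longlongrightarrow> f a) (at_right a)" using ic[of a] unfolding isCont_def filterlim_at_split by simp
  moreover have "(f \<longlongrightarrow> s * a + c) (at_right a)" using Lim_transform_eventually[OF lin ev1] .
  ultimately have fa: "f a = s * a + c" using tendsto_unique[OF trivial_limit_at_right_real] by blast
  have "(f \<longlongrightarrow> f b) (at_left b)" using ic[of b] unfolding isCont_def filterlim_at_split by simp
  moreover have "(f \<longlongrightarrow> s * b + c) (at_left b)" using Lim_transform_eventually[OF lin ev2] .
  ultimately have fb: "f b = s * b + c" using tendsto_unique[OF trivial_limit_at_left_real] by blast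
  show ?thesis
  proof
    fix t assume "t \<in> {a..b}"
    then have "t = a \<or> t = b \<or> t \<in> {a<..<b}" by auto
    then show "f t = s * t + c" using fa fb h by auto
  qed
qed

lemma thompson_PLD:
  assumes "f \<in> thompsonF" shows "PLD f"
proof -
  have sm: "strict_mono f" and cont: "continuous_on UNIV f" using assms unfolding thompsonF_def by blast+
  have "\<exists>P. finite P \<and> (\<forall>x\<in>P. dyadic x \<and> dyadic (f x)) \<and>
    (\<forall>a b. a < b \<and> {a<..<b} \<inter> P = {} \<longrightarrow> (\<exists>k::int. \<exists>c. \<forall>t\<in>{a<..<b}. f t = 2 powi k * t + c))"
    using assms unfolding thompsonF_def by blast
  then obtain P where P: "finite P" "\<forall>x\<in>P. dyadic x \<and> dyadic (f x)"
    "\<forall>a b. a < b \<and> {a<..<b} \<inter> P = {} \<longrightarrow> (\<exists>k::int. \<exists>c. \<forall>t\<in>{a<..<b}. f t = 2 powi k * t + c)"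
    using assms thompsonF_def by auto
  have "\<forall>a b. a < b \<and> {a<..<b} \<inter> P = {} \<longrightarrow> (\<exists>k::int. \<exists>c. \<forall>t\<in>{a..b}. f t = 2 powi k * t + c)"
    using P(3) open_to_closed[OF cont] by meson
  moreover have "\<exists>m::int. \<exists>a. \<forall>t\<le>a. f t = t - of_int m" "\<exists>n::int. \<exists>b. \<forall>t\<ge>b. f t = t - of_int n"
    using assms unfolding thompsonF_def by blast+
  ultimately show ?thesis unfolding PLD_def using sm P(1,2) by blast
qed

lemma thompson_PLD_inv:
  assumes "f \<in> thompsonF" shows "PLD (inv f)"
proof -
  let ?g = "inv f"
  have sm: "strict_mono f" and su: "surj f" and cont: "continuous_on UNIV f"
    using assms unfolding thompsonF_def by blast+
  have inj: "inj f" using sm strict_mono_imp_inj_on by blast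
  have gf: "?g (f x) = x" for x using inv_f_f[OF inj] .
  have fg: "f (?g y) = y" for y using surj_f_inv_f[OF su] .
  have smg: "strict_mono ?g" using strict_mono_inv[OF sm su] .
  have "\<exists>P. finite P \<and> (\<forall>x\<in>P. dyadic x \<and> dyadic (f x)) \<and>
    (\<forall>a b. a < b \<and> {a<..<b} \<inter> P = {} \<longrightarrow> (\<exists>k::int. \<exists>c. \<forall>t\<in>{a<..<b}. f t = 2 powi k * t + c))"
    using assms unfolding thompsonF_def by blast
  then obtain P where P: "finite P" "\<forall>x\<in>P. dyadic x \<and> dyadic (f x)"
    "\<forall>a b. a < b \<and> {a<..<b} \<inter> P = {} \<longrightarrow> (\<exists>k::int. \<exists>c. \<forall>t\<in>{a<..<b}. f t = 2 powi k * t + c)"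
    using assms thompsonF_def by auto
  have cl: "\<forall>a b. a < b \<and> {a<..<b} \<inter> P = {} \<longrightarrow> (\<exists>k::int. \<exists>c. \<forall>t\<in>{a..b}. f t = 2 powi k * t + c)"
    using P(3) open_to_closed[OF cont] by meson
  have "\<forall>a b. a < b \<and> {a<..<b} \<inter> f ` P = {} \<longrightarrow> (\<exists>k::int. \<exists>c. \<forall>t\<in>{a..b}. ?g t = 2 powi k * t + c)"
  proof (intro allI impI)
    fix a b assume h: "a < b \<and> {a<..<b} \<inter> f ` P = {}"
    have gab: "?g a < ?g b" using h smg strict_monoD by blast
    have "{?g a<..<?g b} \<inter> P = {}"
    proof (rule ccontr)
      assume "{?g a<..<?g b} \<inter> P \<noteq> {}"
      then obtain p where p: "p \<in> P" "?g a < p" "p < ?g b" by auto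
      have "f (?g a) < f p" using strict_monoD[OF sm p(2)] .
      moreover have "f p < f (?g b)" using strict_monoD[OF sm p(3)] .
      ultimately have "a < f p" "f p < b" using fg by simp_all
      then show False using h p(1) by auto
    qed
    with cl gab obtain k c where kc: "\<forall>t\<in>{?g a..?g b}. f t = 2 powi k * t + c" by blast
    have "\<forall>t\<in>{a..b}. ?g t = 2 powi (-k) * t + (- c * 2 powi (-k))"
    proof
      fix t assume t: "t \<in> {a..b}"
      have mg: "mono ?g" by (rule strict_mono_mono[OF smg])
      have "?g a \<le> ?g t" "?g t \<le> ?g b" using t monoD[OF mg] by auto
      then have "f (?g t) = 2 powi k * ?g t + c" using kc by simp
      then have tt: "t = 2 powi k * ?g t + c" using fg[of t] by simp
      have inv1: "(2::real) powi (-k) * 2 powi k = 1" by (simp add: power_int_minus)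
      have "2 powi (-k) * t + (- c * 2 powi (-k)) = 2 powi (-k) * (t - c)" by (simp add: algebra_simps)
      also have "\<dots> = 2 powi (-k) * (2 powi k * ?g t)" using tt by simp
      also have "\<dots> = (2 powi (-k) * 2 powi k) * ?g t" by (simp only: mult.assoc)
      also have "\<dots> = ?g t" using inv1 by simp
      finally show "?g t = 2 powi (-k) * t + (- c * 2 powi (-k))" by simp
    qed
    then show "\<exists>k::int. \<exists>c. \<forall>t\<in>{a..b}. ?g t = 2 powi k * t + c" by blast
  qed
  moreover have "finite (f ` P)" "\<forall>x\<in>f ` P. dyadic x" using P by auto
  moreover have "\<exists>m::int. \<exists>a. \<forall>t\<le>a. ?g t = t - of_int m"
  proof -
    have "\<exists>m::int. \<exists>a. \<forall>t\<le>a. f t = t - of_int m" using assms unfolding thompsonF_def by blast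
    then obtain m a where ma: "\<forall>t\<le>a. f t = t - of_int m" by blast
    have "\<forall>t\<le>a - of_int m. ?g t = t - of_int (-m)"
    proof (intro allI impI)
      fix t assume "t \<le> a - of_int m"
      then have "f (t + of_int m) = t" using ma by auto
      then have "?g t = t + of_int m" using gf[of "t + of_int m"] by simp
      then show "?g t = t - of_int (-m)" by simp
    qed
    then show ?thesis by blast
  qed
  moreover have "\<exists>n::int. \<exists>b. \<forall>t\<ge>b. ?g t = t - of_int n"
  proof -
    have "\<exists>n::int. \<exists>b. \<forall>t\<ge>b. f t = t - of_int n" using assms unfolding thompsonF_def by blast
    then obtain n b where nb: "\<forall>t\<ge>b. f t = t - of_int n" by blast
    have "\<forall>t\<ge>b - of_int n. ?g t = t - of_int (-n)"
    proof (intro allI impI)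
      fix t assume "t \<ge> b - of_int n"
      then have "f (t + of_int n) = t" using nb by auto
      then have "?g t = t + of_int n" using gf[of "t + of_int n"] by simp
      then show "?g t = t - of_int (-n)" by simp
    qed
    then show ?thesis by blast
  qed
  ultimately show ?thesis unfolding PLD_def using smg by blast
qed


lemma cell_lt: "(of_int z / 2^E :: real) < (of_int z + 1) / 2^E"
  by (simp add: divide_strict_right_mono)

lemma PLD_cells:
  assumes "PLD f"
  shows "\<exists>E Lz Hz. \<forall>z::int. \<exists>u c. u \<le> Lz + Hz \<and>
           (\<forall>t\<in>{of_int z / 2^E .. (of_int z + 1) / 2^E}. f t = (2^u / 2^Lz) * t + c)"
proof -
  obtain P where P: "finite P" "\<forall>x\<in>P. dyadic x"
    "\<forall>a b. a < b \<and> {a<..<b} \<inter> P = {} \<longrightarrow> (\<exists>k::int. \<exists>c. \<forall>t\<in>{a..b}. f t = 2 powi k * t + c)"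
    using assms unfolding PLD_def by blast
  obtain m a0 where ma: "\<forall>t\<le>a0. f t = t - of_int m" using assms unfolding PLD_def by blast
  obtain n b0 where nb: "\<forall>t\<ge>b0. f t = t - of_int n" using assms unfolding PLD_def by blast
  obtain E where E: "\<forall>x\<in>P. x * 2^E \<in> \<int>" using dyadic_bound[OF P(1,2)] by blast
  have free: "{of_int z / 2^E <..< (of_int z + 1) / 2^E} \<inter> P = {}" for z :: int
  proof (rule ccontr)
    assume "{of_int z / 2^E <..< (of_int z + 1) / 2^E} \<inter> P \<noteq> {}"
    then obtain p where p: "p \<in> P" "of_int z / 2^E < p" "p < (of_int z + 1) / 2^E" by auto
    obtain w where w: "p * 2^E = of_int w" using E p(1) Ints_cases by metis
    have "of_int z < p * 2^E" using p(2) by (simp add: pos_divide_less_eq)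
    moreover have "p * 2^E < of_int z + 1" using p(3) by (simp add: pos_less_divide_eq)
    ultimately have "real_of_int z < of_int w" "real_of_int w < of_int (z + 1)" using w by simp_all
    then have "z < w" "w < z + 1" by (simp_all only: of_int_less_iff)
    then show False by linarith
  qed
  have cell: "\<forall>z::int. \<exists>k::int. \<exists>c. \<forall>t\<in>{of_int z / 2^E .. (of_int z + 1) / 2^E}. f t = 2 powi k * t + c"
    using P(3) free cell_lt by blast
  define zlo where "zlo = \<lfloor>a0 * 2^E\<rfloor> - 1"
  define zhi where "zhi = \<lceil>b0 * 2^E\<rceil> + 1"
  obtain lo hi where lh: "\<forall>z\<in>{zlo..zhi}. \<exists>k. lo \<le> k \<and> k \<le> hi \<and>
      (\<exists>c. \<forall>t\<in>{of_int z / 2^E .. (of_int z + 1) / 2^E}. f t = 2 powi k * t + c)"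
    using finite_bound[of "{zlo..zhi}" "\<lambda>z k. \<exists>c. \<forall>t\<in>{of_int z / 2^E .. (of_int z + 1) / 2^E}. f t = 2 powi k * t + c"] cell
    by blast
  define Lz where "Lz = nat (- min lo 0)"
  define Hz where "Hz = nat (max hi 0)"
  have allz: "\<exists>k. - int Lz \<le> k \<and> k \<le> int Hz \<and>
      (\<exists>c. \<forall>t\<in>{of_int z / 2^E .. (of_int z + 1) / 2^E}. f t = 2 powi k * t + c)" for z
  proof (cases "z < zlo")
    case True
    have "\<forall>t\<in>{of_int z / 2^E .. (of_int z + 1) / 2^E}. f t = 2 powi 0 * t + (- of_int m)"
    proof
      fix t :: real assume t: "t \<in> {of_int z / 2^E .. (of_int z + 1) / 2^E}"
      have "of_int z + 1 \<le> a0 * 2^E" using True unfolding zlo_def by linarith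
      then have "(of_int z + 1) / 2^E \<le> a0" by (simp add: pos_divide_le_eq)
      then have "t \<le> a0" using t by simp
      then show "f t = 2 powi 0 * t + (- of_int m)" using ma by simp
    qed
    then show ?thesis by (intro exI[of _ 0]) (auto simp: Lz_def Hz_def)
  next
    case False
    show ?thesis
    proof (cases "z > zhi")
      case True
      have "\<forall>t\<in>{of_int z / 2^E .. (of_int z + 1) / 2^E}. f t = 2 powi 0 * t + (- of_int n)"
      proof
        fix t :: real assume t: "t \<in> {of_int z / 2^E .. (of_int z + 1) / 2^E}"
        have "b0 * 2^E \<le> of_int z" using True unfolding zhi_def by linarith
        then have "b0 \<le> of_int z / 2^E" by (simp add: pos_le_divide_eq)
        then have "b0 \<le> t" using t by simp
        then show "f t = 2 powi 0 * t + (- of_int n)" using nb by simp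
      qed
      then show ?thesis by (intro exI[of _ 0]) (auto simp: Lz_def Hz_def)
    next
      case False
      with \<open>\<not> z < zlo\<close> have "z \<in> {zlo..zhi}" by simp
      then obtain k where "lo \<le> k" "k \<le> hi"
        "\<exists>c. \<forall>t\<in>{of_int z / 2^E .. (of_int z + 1) / 2^E}. f t = 2 powi k * t + c" using lh by blast
      moreover have "- int Lz \<le> k" "k \<le> int Hz" using \<open>lo \<le> k\<close> \<open>k \<le> hi\<close> unfolding Lz_def Hz_def by simp_all
      ultimately show ?thesis by blast
    qed
  qed
  have "\<forall>z::int. \<exists>u c. u \<le> Lz + Hz \<and>
           (\<forall>t\<in>{of_int z / 2^E .. (of_int z + 1) / 2^E}. f t = (2^u / 2^Lz) * t + c)"
  proof
    fix z :: int
    obtain k c where k: "- int Lz \<le> k" "k \<le> int Hz"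
      "\<forall>t\<in>{of_int z / 2^E .. (of_int z + 1) / 2^E}. f t = 2 powi k * t + c" using allz by blast
    have "(2::real) powi k = 2^(nat (k + int Lz)) / 2^Lz" using powi_nat[OF k(1)] .
    moreover have "nat (k + int Lz) \<le> Lz + Hz" using k(2) by simp
    ultimately show "\<exists>u c. u \<le> Lz + Hz \<and>
           (\<forall>t\<in>{of_int z / 2^E .. (of_int z + 1) / 2^E}. f t = (2^u / 2^Lz) * t + c)"
      using k(3) by metis
  qed
  then show ?thesis by blast
qed

lemma PLD_val:
  fixes f :: "real \<Rightarrow> real" and a0 :: real
  assumes C: "\<forall>z::int. \<exists>u c. u \<le> Lz + Hz \<and>
           (\<forall>t\<in>{of_int z / 2^E .. (of_int z + 1) / 2^E}. f t = (2^u / 2^Lz) * t + c)"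
    and ma: "\<forall>t\<le>a0. f t = t - of_int m"
  shows "f (of_int z / 2^E) * 2^(E + Lz) \<in> \<int>"
proof -
  define z0 where "z0 = \<lfloor>a0 * 2^E\<rfloor>"
  have base0: "f (of_int z / 2^E) * 2^(E + Lz) \<in> \<int>" if "z \<le> z0" for z
  proof -
    have "of_int z \<le> a0 * 2^E" using that unfolding z0_def by linarith
    then have "of_int z / 2^E \<le> a0" by (simp add: pos_divide_le_eq)
    then have fz: "f (of_int z / 2^E) = of_int z / 2^E - of_int m" using ma by simp
    have "f (of_int z / 2^E) * 2^(E + Lz) = (of_int z / 2^E - of_int m) * (2^E * 2^Lz)"
      unfolding fz by (simp add: power_add)
    also have "\<dots> = of_int z * 2^Lz - of_int m * 2^(E + Lz)"
      by (simp add: power_add field_simps)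
    finally have "f (of_int z / 2^E) * 2^(E + Lz) = of_int z * 2^Lz - of_int m * 2^(E + Lz)" .
    moreover have "of_int z * (2::real)^Lz - of_int m * 2^(E + Lz) \<in> \<int>"
      by (intro Ints_diff Ints_mult Ints_power) simp_all
    ultimately show ?thesis by simp
  qed
  have step0: "f (of_int (z + 1) / 2^E) * 2^(E + Lz) \<in> \<int>"
    if "f (of_int z / 2^E) * 2^(E + Lz) \<in> \<int>" for z
  proof -
    obtain u c where uc: "\<forall>t\<in>{of_int z / 2^E .. (of_int z + 1) / 2^E}. f t = (2^u / 2^Lz) * t + c"
      using C by blast
    have lt: "(of_int z / 2^E :: real) < (of_int z + 1) / 2^E" by (rule cell_lt)
    have "f ((of_int z + 1) / 2^E) - f (of_int z / 2^E) = (2^u / 2^Lz) * ((of_int z + 1) / 2^E - of_int z / 2^E)"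
      using affine_slope[OF uc] lt by simp
    then have "f ((of_int z + 1) / 2^E) * 2^(E + Lz) = f (of_int z / 2^E) * 2^(E + Lz) + 2^u"
      by (simp add: power_add field_simps)
    moreover have "f (of_int z / 2^E) * 2^(E + Lz) + (2::real)^u \<in> \<int>"
      using that by (intro Ints_add Ints_power) simp_all
    ultimately show ?thesis by simp
  qed
  show ?thesis
  proof (cases "z \<le> z0")
    case True then show ?thesis using base0 by simp
  next
    case False
    then have "z0 \<le> z" by simp
    then show ?thesis
    proof (induction z rule: int_ge_induct)
      case base then show ?case using base0[of z0] by simp
    next
      case (step i) then show ?case using step0[of i] by simp
    qed
  qed
qed

lemma div_bounds:
  fixes j :: int and D :: nat
  shows "(j div 2^D) * 2^D \<le> j" "j + 1 \<le> (j div 2^D + 1) * 2^D"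
proof -
  have p: "(0::int) < 2^D" by simp
  have "j = (j div 2^D) * 2^D + j mod 2^D" by (rule div_mult_mod_eq[symmetric])
  moreover have "0 \<le> j mod 2^D" "j mod 2^D < 2^D" using p by simp_all
  moreover have "(j div 2^D + 1) * 2^D = (j div 2^D) * 2^D + 2^D" by (simp add: algebra_simps)
  ultimately show "(j div 2^D) * 2^D \<le> j" "j + 1 \<le> (j div 2^D + 1) * 2^D"
    by linarith+
qed

lemma PLD_ok:
  assumes "PLD f" shows "\<exists>Nf. ok f Nf"
proof -
  obtain E Lz Hz where C: "\<forall>z::int. \<exists>u c. u \<le> Lz + Hz \<and>
           (\<forall>t\<in>{of_int z / 2^E .. (of_int z + 1) / 2^E}. f t = (2^u / 2^Lz) * t + c)"
    using PLD_cells[OF assms] by blast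
  obtain m a0 where ma: "\<forall>t\<le>a0. f t = t - of_int m" using assms unfolding PLD_def by blast
  define D where "D = Lz + Hz"
  define Nf where "Nf = E + D"
  have "ok f Nf" unfolding ok_def
  proof
    fix j :: int
    define z where "z = j div 2^D"
    let ?a = "of_int j / 2^Nf :: real" and ?b = "(of_int j + 1) / 2^Nf :: real"
    obtain u c where u: "u \<le> Lz + Hz" and uc: "\<forall>t\<in>{of_int z / 2^E .. (of_int z + 1) / 2^E}. f t = (2^u / 2^Lz) * t + c"
      using C by blast
    have zb: "z * 2^D \<le> j" "j + 1 \<le> (z + 1) * 2^D" using div_bounds[of j D] unfolding z_def by simp_all
    have zb': "real_of_int z * 2^D \<le> of_int j" "real_of_int j + 1 \<le> (of_int z + 1) * 2^D"
    proof -
      have "real_of_int (z * 2^D) \<le> of_int j" using zb(1) by (simp only: of_int_le_iff)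
      then show "real_of_int z * 2^D \<le> of_int j" by simp
      have "real_of_int (j + 1) \<le> of_int ((z + 1) * 2^D)" using zb(2) by (simp only: of_int_le_iff)
      then show "real_of_int j + 1 \<le> (of_int z + 1) * 2^D" by simp
    qed
    have lo: "of_int z / 2^E \<le> ?a" unfolding Nf_def scale_le using zb'(1) .
    have hi: "?b \<le> (of_int z + 1) / 2^E" unfolding Nf_def scale_le2 using zb'(2) .
    have ab: "?a < ?b" by (rule cell_lt)
    have sdab: "sd ?a ?b" unfolding sd_def by blast
    have aff: "affine_on f ?a ?b"
      using affine_sub[of f "of_int z / 2^E" "(of_int z + 1) / 2^E" ?a ?b] uc lo hi unfolding affine_on_def by blast
    define w where "w = Lz + Hz - u"
    define p where "p = E + Lz + w"
    have upe: "u + p = Lz + Nf" unfolding p_def w_def Nf_def D_def using u by simp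
    have X: "(2::real)^u * 2^p = 2^Lz * 2^Nf" by (simp only: power_add[symmetric] upe)
    have fba: "f ?b - f ?a = (2^u / 2^Lz) * (?b - ?a)" using affine_slope[OF uc] lo hi ab by simp
    have len: "f ?b - f ?a = 1 / 2^p"
    proof -
      have "f ?b - f ?a = 2^u / (2^Lz * 2^Nf)" using fba by (simp add: field_simps)
      also have "\<dots> = 1 / 2^p" using X by (simp add: field_simps)
      finally show ?thesis .
    qed
    have V: "f (of_int z / 2^E) * 2^(E + Lz) \<in> \<int>" using PLD_val[OF C ma] .
    have fa: "f ?a - f (of_int z / 2^E) = (2^u / 2^Lz) * (?a - of_int z / 2^E)"
      using affine_slope[OF uc] lo hi ab by simp
    have Y: "?a - of_int z / 2^E = (of_int j - of_int z * 2^D) / 2^Nf"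
      unfolding Nf_def by (simp add: power_add field_simps)
    have "f ?a * 2^p = f (of_int z / 2^E) * 2^(E + Lz) * 2^w + (of_int j - of_int z * 2^D)"
    proof -
      have "f ?a * 2^p = f (of_int z / 2^E) * 2^p + (2^u / 2^Lz) * ((of_int j - of_int z * 2^D) / 2^Nf) * 2^p"
        using fa Y by (simp add: algebra_simps)
      also have "(2^u / 2^Lz) * ((of_int j - of_int z * 2^D) / 2^Nf) * 2^p = (of_int j - of_int z * 2^D) * ((2^u * 2^p) / (2^Lz * 2^Nf) :: real)"
        by (simp add: field_simps)
      also have "(2^u * 2^p) / (2^Lz * 2^Nf) = (1::real)" using X by simp
      also have "f (of_int z / 2^E) * 2^p = f (of_int z / 2^E) * 2^(E + Lz) * 2^w"
        unfolding p_def by (simp add: power_add)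
      finally show ?thesis by simp
    qed
    moreover have "f (of_int z / 2^E) * 2^(E + Lz) * 2^w + (of_int j - of_int z * (2::real)^D) \<in> \<int>"
    proof -
      have p2: "(2::real)^w \<in> \<int>" "(2::real)^D \<in> \<int>" by (intro Ints_power, simp)+
      have "f (of_int z / 2^E) * 2^(E + Lz) * 2^w \<in> \<int>" by (rule Ints_mult[OF V p2(1)])
      moreover have "of_int j - of_int z * (2::real)^D \<in> \<int>" using p2(2) by (intro Ints_diff Ints_mult) simp_all
      ultimately show ?thesis by (rule Ints_add)
    qed
    ultimately have "f ?a * 2^p \<in> \<int>" by simp
    then have "sd (f ?a) (f ?b)" using len sd_iff by blast
    then show "good f ?a ?b" unfolding good_def using sdab aff by simp
  qed
  then show ?thesis by blast
qed

lemma PLD_endgood: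
  assumes "PLD f" shows "endgood f"
proof -
  obtain m a0 where ma: "\<forall>t\<le>a0. f t = t - of_int m" using assms unfolding PLD_def by blast
  obtain n b0 where nb: "\<forall>t\<ge>b0. f t = t - of_int n" using assms unfolding PLD_def by blast
  define M where "M = max \<lceil>b0\<rceil> \<lceil>1 - a0\<rceil>"
  have "good f (of_int i) (of_int i + 1)" if "i \<ge> M \<or> i \<le> -M" for i
  proof -
    have sdu: "sd (of_int i) (of_int i + 1)" by (rule sd_unit)
    show ?thesis
    proof (cases "i \<ge> M")
      case True
      then have "b0 \<le> of_int i" unfolding M_def by linarith
      then have fe: "\<forall>t\<in>{of_int i..of_int i + 1}. f t = 1 * t + (- of_int n)" using nb by auto
      have "sd (of_int (i - n)) (of_int (i - n) + 1)" by (rule sd_unit)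
      moreover have "f (of_int i) = of_int (i - n)" "f (of_int i + 1) = of_int (i - n) + 1" using fe by auto
      ultimately have "sd (f (of_int i)) (f (of_int i + 1))" by simp
      then show ?thesis unfolding good_def affine_on_def using sdu fe by blast
    next
      case False
      then have "i \<le> -M" using that by simp
      then have "of_int i + 1 \<le> a0" unfolding M_def by linarith
      then have fe: "\<forall>t\<in>{of_int i..of_int i + 1}. f t = 1 * t + (- of_int m)" using ma by auto
      have "sd (of_int (i - m)) (of_int (i - m) + 1)" by (rule sd_unit)
      moreover have "f (of_int i) = of_int (i - m)" "f (of_int i + 1) = of_int (i - m) + 1" using fe by auto
      ultimately have "sd (f (of_int i)) (f (of_int i + 1))" by simp
      then show ?thesis unfolding good_def affine_on_def using sdu fe by blast
    qed
  qed
  then show ?thesis unfolding endgood_def by blast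
qed


lemma shift_sets_gen:
  assumes sh: "\<And>a b t. S (a + of_int s) (b + of_int s) t = (\<lambda>(x, y). (x + of_int s, y + of_int s)) ` S a b t"
  shows "(c, d) \<in> (\<Union>j. S (of_int j) (of_int j + 1) (F (j - s))) \<longleftrightarrow>
         (c - of_int s, d - of_int s) \<in> (\<Union>i. S (of_int i) (of_int i + 1) (F i))"
proof -
  have eq: "S (of_int j) (of_int j + 1) (F (j - s)) =
        (\<lambda>(x, y). (x + of_int s, y + of_int s)) ` S (of_int (j - s)) (of_int (j - s) + 1) (F (j - s))" for j
  proof -
    have "S (of_int j) (of_int j + 1) (F (j - s)) = S (of_int (j - s) + of_int s) (of_int (j - s) + 1 + of_int s) (F (j - s))"
      by simp
    also have "\<dots> = (\<lambda>(x, y). (x + of_int s, y + of_int s)) ` S (of_int (j - s)) (of_int (j - s) + 1) (F (j - s))"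
      by (rule sh)
    finally show ?thesis .
  qed
  have "(c, d) \<in> (\<Union>j. S (of_int j) (of_int j + 1) (F (j - s))) \<longleftrightarrow>
        (\<exists>j. (c - of_int s, d - of_int s) \<in> S (of_int (j - s)) (of_int (j - s) + 1) (F (j - s)))"
    unfolding eq by force
  also have "\<dots> \<longleftrightarrow> (\<exists>i. (c - of_int s, d - of_int s) \<in> S (of_int i) (of_int i + 1) (F i))"
    by (metis add_diff_cancel_right')
  finally show ?thesis by blast
qed

lemma shift_fleaves: "(c, d) \<in> fleaves (\<lambda>j. F (j - s)) \<longleftrightarrow> (c - of_int s, d - of_int s) \<in> fleaves F"
  unfolding fleaves_def by (rule shift_sets_gen[where S=leaves, OF leaves_shift])

lemma shift_fcarets: "(c, d) \<in> fcarets (\<lambda>j. F (j - s)) \<longleftrightarrow> (c - of_int s, d - of_int s) \<in> fcarets F"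
  unfolding fcarets_def by (rule shift_sets_gen[where S=carets, OF carets_shift])

lemma shift_felem: "(c, d) \<in> felem_carets (\<lambda>j. F (j - s)) \<longleftrightarrow> (c - of_int s, d - of_int s) \<in> felem_carets F"
  unfolding felem_carets_def by (rule shift_sets_gen[where S=elem_carets, OF elem_carets_shift])

lemma shift_forest: "is_forest (\<lambda>j. F (j - s)) \<longleftrightarrow> is_forest F"
proof -
  have "{j. F (j - s) \<noteq> Leaf} = (\<lambda>i. i + s) ` {i. F i \<noteq> Leaf}"
  proof (rule set_eqI)
    fix j
    show "j \<in> {j. F (j - s) \<noteq> Leaf} \<longleftrightarrow> j \<in> (\<lambda>i. i + s) ` {i. F i \<noteq> Leaf}"
    proof
      assume "j \<in> {j. F (j - s) \<noteq> Leaf}"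
      then show "j \<in> (\<lambda>i. i + s) ` {i. F i \<noteq> Leaf}" by (intro image_eqI[of _ _ "j - s"]) simp_all
    next
      assume "j \<in> (\<lambda>i. i + s) ` {i. F i \<noteq> Leaf}"
      then obtain i where "j = i + s" "F i \<noteq> Leaf" by blast
      then show "j \<in> {j. F (j - s) \<noteq> Leaf}" by simp
    qed
  qed
  moreover have "inj (\<lambda>i::int. i + s)" by (simp add: inj_on_def)
  ultimately show ?thesis unfolding is_forest_def by (simp add: finite_image_iff inj_on_subset)
qed

lemma shift_diag:
  assumes h: "\<And>t. h t = g t + of_int s"
  shows "forest_diagram h B (\<lambda>j. T (j - s)) \<longleftrightarrow> forest_diagram g B T"
proof -
  have aff: "(\<exists>sl c. \<forall>t\<in>{a..b}. h t = sl * t + c) \<longleftrightarrow> (\<exists>sl c. \<forall>t\<in>{a..b}. g t = sl * t + c)" for a b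
  proof
    assume "\<exists>sl c. \<forall>t\<in>{a..b}. h t = sl * t + c"
    then obtain sl c where "\<forall>t\<in>{a..b}. h t = sl * t + c" by blast
    then have "\<forall>t\<in>{a..b}. g t = sl * t + (c - of_int s)" using h by (simp add: algebra_simps)
    then show "\<exists>sl c. \<forall>t\<in>{a..b}. g t = sl * t + c" by blast
  next
    assume "\<exists>sl c. \<forall>t\<in>{a..b}. g t = sl * t + c"
    then obtain sl c where "\<forall>t\<in>{a..b}. g t = sl * t + c" by blast
    then have "\<forall>t\<in>{a..b}. h t = sl * t + (c + of_int s)" using h by (simp add: algebra_simps)
    then show "\<exists>sl c. \<forall>t\<in>{a..b}. h t = sl * t + c" by blast
  qed
  have lv: "(h a, h b) \<in> fleaves (\<lambda>j. T (j - s)) \<longleftrightarrow> (g a, g b) \<in> fleaves T" for a b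
    using shift_fleaves[of "h a" "h b" T s] h by simp
  show ?thesis unfolding forest_diagram_def shift_forest using aff lv by auto
qed

lemma shift_red:
  assumes h: "\<And>t. h t = g t + of_int s"
  shows "reduced h B (\<lambda>j. T (j - s)) \<longleftrightarrow> reduced g B T"
proof -
  have "(h a, h b) \<in> felem_carets (\<lambda>j. T (j - s)) \<longleftrightarrow> (g a, g b) \<in> felem_carets T" for a b
    using shift_felem[of "h a" "h b" T s] h by simp
  then show ?thesis unfolding reduced_def by auto
qed

definition RD :: "(real \<Rightarrow> real) \<Rightarrow> forest \<times> forest \<Rightarrow> bool" where
  "RD f = (\<lambda>(B, T). forest_diagram f B T \<and> reduced f B T)"

lemma reduced_diagram_RD: "reduced_diagram f = (THE p. RD f p)"
  unfolding reduced_diagram_def RD_def by simp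

lemma ex1_diag:
  assumes "f \<in> thompsonF"
  shows "\<exists>!p. RD f p"
proof -
  have sm: "strict_mono f" and su: "surj f" using assms unfolding thompsonF_def by blast+
  obtain Nf where okf: "ok f Nf" using PLD_ok[OF thompson_PLD[OF assms]] by blast
  obtain Ng where okg: "ok (inv f) Ng" using PLD_ok[OF thompson_PLD_inv[OF assms]] by blast
  have ef: "endgood f" using PLD_endgood[OF thompson_PLD[OF assms]] .
  have eg: "endgood (inv f)" using PLD_endgood[OF thompson_PLD_inv[OF assms]] .
  have "RD f (Bg f Nf, Bg (inv f) Ng)" using diagram_exists[OF sm su okf okg ef eg] unfolding RD_def by simp
  moreover have "q = p" if "RD f p" "RD f q" for p q
  proof -
    obtain B1 T1 where p: "p = (B1, T1)" by fastforce
    obtain B2 T2 where q: "q = (B2, T2)" by fastforce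
    show ?thesis using diagram_unique[OF sm su, of B1 T1 B2 T2] that p q unfolding RD_def by simp
  qed
  ultimately show ?thesis by blast
qed

lemma rd_props:
  assumes "f \<in> thompsonF"
  shows "forest_diagram f (bottom_forest f) (top_forest f) \<and> reduced f (bottom_forest f) (top_forest f)"
proof -
  have "RD f (reduced_diagram f)" unfolding reduced_diagram_RD using theI'[OF ex1_diag[OF assms]] .
  then show ?thesis unfolding RD_def bottom_forest_def top_forest_def by (simp add: case_prod_beta)
qed

lemma inv_x0: "inv x0 = (\<lambda>t. t + 1)"
proof
  fix y
  have "inj x0" unfolding x0_def by (simp add: inj_on_def)
  moreover have "x0 (y + 1) = y" unfolding x0_def by simp
  ultimately show "inv x0 y = y + 1" by (metis inv_f_f)
qed

lemma rd_shift:
  assumes "f \<in> thompsonF"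
  shows "bottom_forest (inv x0 \<circ> f) = bottom_forest f \<and>
         top_forest (inv x0 \<circ> f) = (\<lambda>j. top_forest f (j - 1))"
proof -
  let ?g = "inv x0 \<circ> f"
  let ?B = "bottom_forest f" and ?T = "top_forest f"
  have g: "?g t = f t + of_int 1" for t unfolding inv_x0 by simp
  have f': "f t = ?g t + of_int (-1)" for t using g by simp
  have sm: "strict_mono f" and su: "surj f" using assms unfolding thompsonF_def by blast+
  have P: "forest_diagram f ?B ?T" "reduced f ?B ?T" using rd_props[OF assms] by auto
  have RDg: "RD ?g (?B, \<lambda>j. ?T (j - 1))"
    using P shift_diag[where h="?g" and g=f and s=1 and B="?B" and T="?T", OF g] shift_red[where h="?g" and g=f and s=1 and B="?B" and T="?T", OF g] unfolding RD_def by simp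
  have "q = (?B, \<lambda>j. ?T (j - 1))" if "RD ?g q" for q
  proof -
    obtain B2 T2 where q: "q = (B2, T2)" by fastforce
    have "forest_diagram ?g B2 T2" "reduced ?g B2 T2" using that q unfolding RD_def by auto
    then have "forest_diagram f B2 (\<lambda>j. T2 (j - (-1)))" "reduced f B2 (\<lambda>j. T2 (j - (-1)))"
      using shift_diag[where h=f and g="?g" and s="-1" and B=B2 and T=T2, OF f'] shift_red[where h=f and g="?g" and s="-1" and B=B2 and T=T2, OF f'] by simp_all
    from diagram_unique[OF sm su this P] have "B2 = ?B" "(\<lambda>j. T2 (j + 1)) = ?T" by simp_all
    then have "T2 = (\<lambda>j. ?T (j - 1))" by (metis diff_add_cancel)
    then show ?thesis using q \<open>B2 = ?B\<close> by simp
  qed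
  then have "reduced_diagram ?g = (?B, \<lambda>j. ?T (j - 1))"
    unfolding reduced_diagram_RD using RDg by (metis theI the_equality)
  then show ?thesis unfolding bottom_forest_def top_forest_def by simp
qed


lemma fleaves_finite_range: "finite {(a, b) \<in> fleaves F. u \<le> a \<and> a \<le> v}"
proof -
  have "{(a, b) \<in> fleaves F. u \<le> a \<and> a \<le> v} \<subseteq> (\<Union>i\<in>{\<lfloor>u\<rfloor>..\<lfloor>v\<rfloor>}. leaves (of_int i) (of_int i + 1) (F i))"
  proof
    fix p assume p: "p \<in> {(a, b) \<in> fleaves F. u \<le> a \<and> a \<le> v}"
    obtain a b where pab: "p = (a, b)" by fastforce
    from p pab obtain i where i: "(a, b) \<in> leaves (of_int i) (of_int i + 1) (F i)" "u \<le> a" "a \<le> v"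
      using fleaves_iff by blast
    from tleaves_bounds[OF i(1)] have "of_int i \<le> a" "a < of_int i + 1" by auto
    then have "\<lfloor>a\<rfloor> = i" by (simp add: floor_unique)
    moreover have "\<lfloor>u\<rfloor> \<le> \<lfloor>a\<rfloor>" "\<lfloor>a\<rfloor> \<le> \<lfloor>v\<rfloor>" using i(2,3) by (simp_all add: floor_mono)
    ultimately show "p \<in> (\<Union>i\<in>{\<lfloor>u\<rfloor>..\<lfloor>v\<rfloor>}. leaves (of_int i) (of_int i + 1) (F i))" using i(1) pab by auto
  qed
  moreover have "finite (\<Union>i\<in>{\<lfloor>u\<rfloor>..\<lfloor>v\<rfloor>}. leaves (of_int i) (of_int i + 1) (F i))"
    using leaves_finite by auto
  ultimately show ?thesis using finite_subset by blast
qed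

lemma fcarets_int: "(of_int z, b) \<in> fcarets F \<longleftrightarrow> (F z \<noteq> Leaf \<and> b = of_int z + 1) \<or> (F z \<noteq> Leaf \<and> (of_int z, b) \<in> carets (of_int z) (of_int z + 1) (F z))"
proof
  assume h: "(of_int z, b) \<in> fcarets F"
  have "(of_int z, b) \<in> carets (of_int z) (of_int z + 1) (F z)" using fcarets_in_tree[OF h] by simp
  then have "F z \<noteq> Leaf" by auto
  then show "(F z \<noteq> Leaf \<and> b = of_int z + 1) \<or> (F z \<noteq> Leaf \<and> (of_int z, b) \<in> carets (of_int z) (of_int z + 1) (F z))"
    using \<open>(of_int z, b) \<in> carets _ _ _\<close> by blast
next
  assume "(F z \<noteq> Leaf \<and> b = of_int z + 1) \<or> (F z \<noteq> Leaf \<and> (of_int z, b) \<in> carets (of_int z) (of_int z + 1) (F z))"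
  then have "(of_int z, b) \<in> carets (of_int z) (of_int z + 1) (F z)" using carets_of_node by blast
  then show "(of_int z, b) \<in> fcarets F" using fcarets_iff by blast
qed

lemma caret_at_int: "(\<exists>b. (of_int z, b) \<in> fcarets F) \<longleftrightarrow> F z \<noteq> Leaf"
  using fcarets_int by blast

lemma label_shift:
  "label (\<lambda>j. F (j - 1)) (x + 1) = (if x = 0 then (if F 0 \<noteq> Leaf then N else R) else label F x)"
proof -
  have car: "(\<exists>b. (x + 1, b) \<in> fcarets (\<lambda>j. F (j - 1))) \<longleftrightarrow> (\<exists>b. (x, b) \<in> fcarets F)"
  proof
    assume "\<exists>b. (x + 1, b) \<in> fcarets (\<lambda>j. F (j - 1))"
    then obtain b where "(x + 1, b) \<in> fcarets (\<lambda>j. F (j - 1))" by blast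
    then have "(x, b - 1) \<in> fcarets F" using shift_fcarets[of "x + 1" b F 1] by simp
    then show "\<exists>b. (x, b) \<in> fcarets F" by blast
  next
    assume "\<exists>b. (x, b) \<in> fcarets F"
    then obtain b where "(x, b) \<in> fcarets F" by blast
    then have "(x + 1, b + 1) \<in> fcarets (\<lambda>j. F (j - 1))" using shift_fcarets[of "x + 1" "b + 1" F 1] by simp
    then show "\<exists>b. (x + 1, b) \<in> fcarets (\<lambda>j. F (j - 1))" by blast
  qed
  have ints: "x + 1 \<in> \<int> \<longleftrightarrow> x \<in> \<int>"
  proof
    assume "x + 1 \<in> \<int>" then have "x + 1 - 1 \<in> \<int>" by (intro Ints_diff) simp_all
    then show "x \<in> \<int>" by simp
  qed (intro Ints_add, simp_all)
  show ?thesis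
  proof (cases "x = 0")
    case True
    have "(\<exists>b. (0, b) \<in> fcarets F) \<longleftrightarrow> F 0 \<noteq> Leaf" using caret_at_int[of 0 F] by simp
    then show ?thesis using True car unfolding label_def by simp
  next
    case False
    have "(x + 1 \<in> \<int> \<and> x + 1 \<le> 0) \<longleftrightarrow> (x \<in> \<int> \<and> x \<le> 0)"
    proof
      assume "x + 1 \<in> \<int> \<and> x + 1 \<le> 0" then show "x \<in> \<int> \<and> x \<le> 0" using ints by simp
    next
      assume h: "x \<in> \<int> \<and> x \<le> 0"
      then obtain z where z: "x = of_int z" using Ints_cases by blast
      with h False have "z < 0" by simp
      then have "x + 1 \<le> 0" using z by simp
      then show "x + 1 \<in> \<int> \<and> x + 1 \<le> 0" using h ints by simp
    qed
    then show ?thesis using False car ints unfolding label_def by simp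
  qed
qed

lemma weight_ge1_L: "weight L x \<ge> 1"
  by (cases x) simp_all

lemma fncarets_shift: "fncarets (\<lambda>j. F (j - 1)) = fncarets F"
proof -
  have "{j. F (j - 1) \<noteq> Leaf} = (\<lambda>k. k + 1) ` {k. F k \<noteq> Leaf}"
  proof (rule set_eqI)
    fix j :: int
    show "j \<in> {j. F (j - 1) \<noteq> Leaf} \<longleftrightarrow> j \<in> (\<lambda>k. k + 1) ` {k. F k \<noteq> Leaf}"
    proof
      assume "j \<in> {j. F (j - 1) \<noteq> Leaf}"
      then show "j \<in> (\<lambda>k. k + 1) ` {k. F k \<noteq> Leaf}" by (intro image_eqI[of _ _ "j - 1"]) simp_all
    next
      assume "j \<in> (\<lambda>k. k + 1) ` {k. F k \<noteq> Leaf}"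
      then show "j \<in> {j. F (j - 1) \<noteq> Leaf}" by auto
    qed
  qed
  moreover have "inj_on (\<lambda>k::int. k + 1) {k. F k \<noteq> Leaf}" by (simp add: inj_on_def)
  ultimately show ?thesis unfolding fncarets_def by (simp add: sum.reindex)
qed


lemma min3:
  fixes a b :: real
  assumes "finite S"
  shows "Min (insert a (insert b S)) \<le> a" "Min (insert a (insert b S)) \<le> b"
    "\<forall>x\<in>S. Min (insert a (insert b S)) \<le> x" "Min (insert a (insert b S)) \<in> insert a (insert b S)"
proof -
  have fin: "finite (insert a (insert b S))" using assms by simp
  show "Min (insert a (insert b S)) \<le> a" by (rule Min_le[OF fin]) simp
  show "Min (insert a (insert b S)) \<le> b" by (rule Min_le[OF fin]) simp
  show "\<forall>x\<in>S. Min (insert a (insert b S)) \<le> x"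
  proof
    fix x assume "x \<in> S" then show "Min (insert a (insert b S)) \<le> x" by (intro Min_le[OF fin]) simp
  qed
  show "Min (insert a (insert b S)) \<in> insert a (insert b S)" by (rule Min_in[OF fin]) simp
qed

lemma max3:
  fixes a b :: real
  assumes "finite S"
  shows "a \<le> Max (insert a (insert b S))" "b \<le> Max (insert a (insert b S))"
    "\<forall>x\<in>S. x \<le> Max (insert a (insert b S))" "Max (insert a (insert b S)) \<in> insert a (insert b S)"
proof -
  have fin: "finite (insert a (insert b S))" using assms by simp
  show "a \<le> Max (insert a (insert b S))" by (rule Max_ge[OF fin]) simp
  show "b \<le> Max (insert a (insert b S))" by (rule Max_ge[OF fin]) simp
  show "\<forall>x\<in>S. x \<le> Max (insert a (insert b S))"
  proof
    fix x assume "x \<in> S" then show "x \<le> Max (insert a (insert b S))" by (intro Max_ge[OF fin]) simp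
  qed
  show "Max (insert a (insert b S)) \<in> insert a (insert b S)" by (rule Max_in[OF fin]) simp
qed

locale TF =
  fixes f :: "real \<Rightarrow> real"
  assumes tf: "f \<in> thompsonF"
begin

abbreviation "Bf \<equiv> bottom_forest f"
abbreviation "Tf \<equiv> top_forest f"
abbreviation "g \<equiv> inv f"
abbreviation "f' \<equiv> inv x0 \<circ> f"
abbreviation "Tf' \<equiv> (\<lambda>j. Tf (j - 1))"

lemma sm: "strict_mono f" and su: "surj f" using tf unfolding thompsonF_def by blast+
lemma injf: "inj f" using sm strict_mono_imp_inj_on by blast
lemma gf: "g (f x) = x" using inv_f_f[OF injf] .
lemma fg: "f (g y) = y" using surj_f_inv_f[OF su] .
lemma smg: "strict_mono g" using strict_mono_inv[OF sm su] .
lemma fd: "forest_diagram f Bf Tf" and red: "reduced f Bf Tf" using rd_props[OF tf] by auto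
lemma isfB: "is_forest Bf" and isfT: "is_forest Tf" using fd unfolding forest_diagram_def by auto
lemma f'_eq: "f' t = f t + 1" unfolding inv_x0 by simp
lemma g'_eq: "inv f' y = g (y - 1)"
proof -
  have "strict_mono f'" unfolding strict_mono_def f'_eq using sm strict_monoD by fastforce
  then have "inj f'" using strict_mono_imp_inj_on by blast
  moreover have "f' (g (y - 1)) = y" unfolding f'_eq fg by simp
  ultimately show ?thesis by (metis inv_f_f)
qed
lemma B': "bottom_forest f' = Bf" and T': "top_forest f' = Tf'" using rd_shift[OF tf] by auto
lemma TL: "fleaves Tf = (\<lambda>(a, b). (f a, f b)) ` fleaves Bf" using top_leaves[OF sm su fd] .

lemma fmono_lt: "a < b \<longleftrightarrow> f a < f b"
  using sm by (metis linorder_neq_iff not_less_iff_gr_or_eq strict_monoD)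
lemma gmono_lt: "a < b \<longleftrightarrow> g a < g b"
  using smg by (metis linorder_neq_iff not_less_iff_gr_or_eq strict_monoD)

lemma nsi_int: "(a, b) \<in> fleaves Bf \<Longrightarrow> a < of_int z \<Longrightarrow> of_int z < b \<Longrightarrow> False"
  using fleaves_noint by blast

lemma nsi_gint: "(a, b) \<in> fleaves Bf \<Longrightarrow> a < g (of_int z) \<Longrightarrow> g (of_int z) < b \<Longrightarrow> False"
proof -
  assume h: "(a, b) \<in> fleaves Bf" "a < g (of_int z)" "g (of_int z) < b"
  have "(f a, f b) \<in> fleaves Tf" using fd h(1) unfolding forest_diagram_def by auto
  moreover have "f a < of_int z" using h(2) fmono_lt fg by metis
  moreover have "of_int z < f b" using h(3) fmono_lt fg by metis
  ultimately show False using fleaves_noint by blast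
qed

definition "SB = {of_int i :: real | i. Bf i \<noteq> Leaf}"
definition "SBh = {of_int i + 1 :: real | i. Bf i \<noteq> Leaf}"
definition "STl = {g (of_int j) | j. Tf j \<noteq> Leaf}"
definition "STh = {g (of_int j + 1) | j. Tf j \<noteq> Leaf}"
definition "A = SB \<union> STl"
definition "A1 = SBh \<union> STh"

lemma finA: "finite A" "finite A1"
proof -
  have fb: "finite {i. Bf i \<noteq> Leaf}" and ft: "finite {j. Tf j \<noteq> Leaf}"
    using isfB isfT unfolding is_forest_def by auto
  have "SB = (\<lambda>i. of_int i) ` {i. Bf i \<noteq> Leaf}" "SBh = (\<lambda>i. of_int i + 1) ` {i. Bf i \<noteq> Leaf}"
       "STl = (\<lambda>j. g (of_int j)) ` {j. Tf j \<noteq> Leaf}" "STh = (\<lambda>j. g (of_int j + 1)) ` {j. Tf j \<noteq> Leaf}"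
    unfolding SB_def SBh_def STl_def STh_def by auto
  then show "finite A" "finite A1" unfolding A_def A1_def using fb ft by simp_all
qed

definition nsi :: "real \<Rightarrow> bool" where
  "nsi x \<longleftrightarrow> (\<forall>a b. (a, b) \<in> fleaves Bf \<longrightarrow> \<not> (a < x \<and> x < b))"

lemma nsi_intI: "nsi (of_int z)" unfolding nsi_def using nsi_int by blast
lemma nsi_gintI: "nsi (g (of_int z))" unfolding nsi_def using nsi_gint by blast

lemma nsiA: "x \<in> A \<Longrightarrow> nsi x" "x \<in> A1 \<Longrightarrow> nsi x"
proof -
  assume "x \<in> A"
  then show "nsi x" unfolding A_def SB_def STl_def using nsi_intI nsi_gintI by auto
next
  assume "x \<in> A1"
  then obtain i where "x = of_int i + 1 \<or> x = g (of_int i + 1)" unfolding A1_def SBh_def STh_def by auto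
  then have "x = of_int (i + 1) \<or> x = g (of_int (i + 1))" by simp
  then show "nsi x" using nsi_intI nsi_gintI by metis
qed

lemma nsi01: "nsi 0" "nsi 1" "nsi (g 0)" "nsi (g (-1))" "nsi (g 1)"
  using nsi_intI[of 0] nsi_intI[of 1] nsi_gintI[of 0] nsi_gintI[of "-1"] nsi_gintI[of 1] by simp_all

lemma STl': "{inv f' (of_int j) | j. Tf' j \<noteq> Leaf} = STl"
proof -
  have "{inv f' (of_int j) | j. Tf' j \<noteq> Leaf} = {g (of_int (j - 1)) | j. Tf (j - 1) \<noteq> Leaf}"
    unfolding g'_eq by simp
  also have "\<dots> = STl" unfolding STl_def
  proof (rule set_eqI, rule iffI)
    fix x assume "x \<in> {g (of_int (j - 1)) | j. Tf (j - 1) \<noteq> Leaf}"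
    then show "x \<in> {g (of_int j) | j. Tf j \<noteq> Leaf}" by blast
  next
    fix x assume "x \<in> {g (of_int j) | j. Tf j \<noteq> Leaf}"
    then obtain j where "x = g (of_int j)" "Tf j \<noteq> Leaf" by blast
    then show "x \<in> {g (of_int (j - 1)) | j. Tf (j - 1) \<noteq> Leaf}"
      by (intro CollectI exI[of _ "j + 1"]) simp
  qed
  finally show ?thesis .
qed

lemma STh': "{inv f' (of_int j + 1) | j. Tf' j \<noteq> Leaf} = STh"
proof -
  have "{inv f' (of_int j + 1) | j. Tf' j \<noteq> Leaf} = {g (of_int (j - 1) + 1) | j. Tf (j - 1) \<noteq> Leaf}"
    unfolding g'_eq by simp
  also have "\<dots> = STh" unfolding STh_def
  proof (rule set_eqI, rule iffI)
    fix x assume "x \<in> {g (of_int (j - 1) + 1) | j. Tf (j - 1) \<noteq> Leaf}"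
    then show "x \<in> {g (of_int j + 1) | j. Tf j \<noteq> Leaf}" by blast
  next
    fix x assume "x \<in> {g (of_int j + 1) | j. Tf j \<noteq> Leaf}"
    then obtain j where "x = g (of_int j + 1)" "Tf j \<noteq> Leaf" by blast
    then show "x \<in> {g (of_int (j - 1) + 1) | j. Tf (j - 1) \<noteq> Leaf}"
      by (intro CollectI exI[of _ "j + 1"]) simp
  qed
  finally show ?thesis .
qed

lemma lo_eq: "supp_lo f Bf Tf = Min (insert 0 (insert (g 0) A))"
  unfolding supp_lo_def A_def SB_def STl_def by (simp add: insert_commute)
lemma hi_eq: "supp_hi f Bf Tf = Max (insert 1 (insert (g 1) A1))"
  unfolding supp_hi_def A1_def SBh_def STh_def by (simp add: insert_commute)
lemma lo'_eq: "supp_lo f' Bf Tf' = Min (insert 0 (insert (g (-1)) A))"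
  unfolding supp_lo_def A_def SB_def STl'[symmetric] g'_eq by (simp add: insert_commute)
lemma hi'_eq: "supp_hi f' Bf Tf' = Max (insert 1 (insert (g 0) A1))"
  unfolding supp_hi_def A1_def SBh_def STh'[symmetric] g'_eq by (simp add: insert_commute)

lemma q_space: "g 0 \<in> spaces Bf"
proof -
  obtain c d where cd: "(c, d) \<in> fleaves Tf" "c \<le> 0" "0 < d" using fleaves_cover[of Tf 0] by blast
  have "c = 0"
  proof (rule ccontr)
    assume "c \<noteq> 0"
    then have "c < of_int 0" "of_int 0 < d" using cd by simp_all
    then show False using fleaves_noint[OF cd(1)] by blast
  qed
  with cd(1) TL obtain a b where ab: "(a, b) \<in> fleaves Bf" "f a = 0" by auto
  then have "a = g 0" using gf by metis
  then show ?thesis using ab unfolding spaces_def by blast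
qed

lemma leafm: "Tf (-1) = Leaf \<Longrightarrow> (g (-1), g 0) \<in> fleaves Bf"
proof -
  assume h: "Tf (-1) = Leaf"
  have "(of_int (-1), of_int (-1) + 1) \<in> leaves (of_int (-1)) (of_int (-1) + 1) (Tf (-1))" using h by simp
  then have "(of_int (-1), of_int (-1) + 1) \<in> fleaves Tf" unfolding fleaves_iff by blast
  then have "(-1, 0) \<in> fleaves Tf" by simp
  with TL obtain a b where ab: "(a, b) \<in> fleaves Bf" "f a = -1" "f b = 0" by auto
  then have "a = g (-1)" "b = g 0" using gf by metis+
  then show ?thesis using ab by simp
qed

lemma leafp: "Tf 0 = Leaf \<Longrightarrow> (g 0, g 1) \<in> fleaves Bf"
proof -
  assume h: "Tf 0 = Leaf"
  have "(of_int 0, of_int 0 + 1) \<in> leaves (of_int 0) (of_int 0 + 1) (Tf 0)" using h by simp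
  then have "(of_int 0, of_int 0 + 1) \<in> fleaves Tf" unfolding fleaves_iff by blast
  then have "(0, 1) \<in> fleaves Tf" by simp
  with TL obtain a b where ab: "(a, b) \<in> fleaves Bf" "f a = 0" "f b = 1" by auto
  then have "a = g 0" "b = g 1" using gf by metis+
  then show ?thesis using ab by simp
qed

lemma inA: "Tf (-1) \<noteq> Leaf \<Longrightarrow> g (-1) \<in> A" "Tf 0 \<noteq> Leaf \<Longrightarrow> g 0 \<in> A" "Tf 0 \<noteq> Leaf \<Longrightarrow> g 1 \<in> A1"
proof -
  assume "Tf (-1) \<noteq> Leaf"
  then have "g (of_int (-1)) \<in> STl" unfolding STl_def by blast
  then show "g (-1) \<in> A" unfolding A_def by simp
next
  assume "Tf 0 \<noteq> Leaf"
  then have "g (of_int 0) \<in> STl" unfolding STl_def by blast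
  then show "g 0 \<in> A" unfolding A_def by simp
next
  assume "Tf 0 \<noteq> Leaf"
  then have "g (of_int 0 + 1) \<in> STh" unfolding STh_def by blast
  then show "g 1 \<in> A1" unfolding A1_def by simp
qed

lemma gorder: "g (-1) < g 0" "g 0 < g 1" using gmono_lt by simp_all

definition "lo = supp_lo f Bf Tf"
definition "hi = supp_hi f Bf Tf"
definition "lo' = supp_lo f' Bf Tf'"
definition "hi' = supp_hi f' Bf Tf'"

lemma lo_props: "lo \<le> 0" "lo \<le> g 0" "\<forall>x\<in>A. lo \<le> x" "lo \<in> insert 0 (insert (g 0) A)"
  unfolding lo_def lo_eq by (rule min3[OF finA(1)])+
lemma lo'_props: "lo' \<le> 0" "lo' \<le> g (-1)" "\<forall>x\<in>A. lo' \<le> x" "lo' \<in> insert 0 (insert (g (-1)) A)"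
  unfolding lo'_def lo'_eq by (rule min3[OF finA(1)])+
lemma hi_props: "1 \<le> hi" "g 1 \<le> hi" "\<forall>x\<in>A1. x \<le> hi" "hi \<in> insert 1 (insert (g 1) A1)"
  unfolding hi_def hi_eq by (rule max3[OF finA(2)])+
lemma hi'_props: "1 \<le> hi'" "g 0 \<le> hi'" "\<forall>x\<in>A1. x \<le> hi'" "hi' \<in> insert 1 (insert (g 0) A1)"
  unfolding hi'_def hi'_eq by (rule max3[OF finA(2)])+

lemma nsi_lo: "nsi lo" "nsi lo'" "nsi hi" "nsi hi'"
  using lo_props(4) lo'_props(4) hi_props(4) hi'_props(4) nsiA nsi01 by auto

lemma lo'_le: "lo' \<le> lo"
proof -
  have "lo' \<le> x" if "x \<in> insert 0 (insert (g 0) A)" for x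
    using that lo'_props gorder by auto
  then show ?thesis using lo_props(4) by blast
qed

lemma hi'_le: "hi' \<le> hi"
proof -
  have "x \<le> hi" if "x \<in> insert 1 (insert (g 0) A1)" for x
    using that hi_props gorder by auto
  then show ?thesis using hi'_props(4) by blast
qed

lemma lo_case: "lo' < lo \<Longrightarrow> lo' = g (-1) \<and> lo = g 0 \<and> Tf (-1) = Leaf"
proof -
  assume h: "lo' < lo"
  have l1: "lo' = g (-1)" using lo'_props(4) h lo_props by auto
  have tm: "Tf (-1) = Leaf"
  proof (rule ccontr)
    assume "Tf (-1) \<noteq> Leaf"
    then have "g (-1) \<in> A" by (rule inA)
    then show False using lo_props(3) l1 h by auto
  qed
  have lf: "(g (-1), g 0) \<in> fleaves Bf" using leafm[OF tm] .
  have "lo = g 0"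
  proof (rule ccontr)
    assume "lo \<noteq> g 0"
    then have "lo < g 0" using lo_props(2) by simp
    moreover have "g (-1) < lo" using h l1 by simp
    ultimately show False using nsi_lo(1) lf unfolding nsi_def by blast
  qed
  then show ?thesis using l1 tm by simp
qed

lemma hi_case: "hi' < hi \<Longrightarrow> hi = g 1 \<and> hi' = g 0 \<and> Tf 0 = Leaf"
proof -
  assume h: "hi' < hi"
  have h1: "hi = g 1" using hi_props(4) h hi'_props by auto
  have t0: "Tf 0 = Leaf"
  proof (rule ccontr)
    assume "Tf 0 \<noteq> Leaf"
    then have "g 1 \<in> A1" by (rule inA)
    then show False using hi'_props(3) h1 h by auto
  qed
  have lf: "(g 0, g 1) \<in> fleaves Bf" using leafp[OF t0] .
  have "hi' = g 0"
  proof (rule ccontr)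
    assume "hi' \<noteq> g 0"
    then have "g 0 < hi'" using hi'_props(2) by simp
    moreover have "hi' < g 1" using h h1 by simp
    ultimately show False using nsi_lo(4) lf unfolding nsi_def by blast
  qed
  then show ?thesis using h1 t0 by simp
qed

lemma not_both: "\<not> (lo' < lo \<and> hi' < hi)"
  using lo_case hi_case lo_props(1) hi'_props(1) by fastforce

end


context TF
begin

definition "W p = weight (label Tf (f p)) (label Bf p)"
definition "W' p = weight (label Tf' (f' p)) (label Bf p)"
definition "SS = {p \<in> spaces Bf. lo < p \<and> p < hi}"
definition "SS' = {p \<in> spaces Bf. lo' < p \<and> p < hi'}"
definition "Cols = {(a, b) \<in> fleaves Bf. lo \<le> a \<and> b \<le> hi}"
definition "Cols' = {(a, b) \<in> fleaves Bf. lo' \<le> a \<and> b \<le> hi'}"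

lemma fin_sp: "finite {p \<in> spaces Bf. u < p \<and> p < v}"
proof -
  have "{p \<in> spaces Bf. u < p \<and> p < v} \<subseteq> fst ` {(a, b) \<in> fleaves Bf. u \<le> a \<and> a \<le> v}"
    unfolding spaces_def by force
  moreover have "finite (fst ` {(a, b) \<in> fleaves Bf. u \<le> a \<and> a \<le> v})"
    using fleaves_finite_range by blast
  ultimately show ?thesis using finite_subset by blast
qed

lemma fin_cols: "finite {(a, b) \<in> fleaves Bf. u \<le> a \<and> b \<le> v}"
proof -
  have "{(a, b) \<in> fleaves Bf. u \<le> a \<and> b \<le> v} \<subseteq> {(a, b) \<in> fleaves Bf. u \<le> a \<and> a \<le> v}"
    using fleaves_bounds by fastforce
  then show ?thesis using fleaves_finite_range finite_subset by blast
qed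

lemma finSS: "finite SS" "finite SS'" unfolding SS_def SS'_def using fin_sp by blast+
lemma finCols: "finite Cols" "finite Cols'" unfolding Cols_def Cols'_def using fin_cols by blast+

lemma ell_f: "ell f = sum W SS + ell1 f"
  unfolding ell_def ell0_def W_def SS_def support_spaces_def lo_def hi_def by simp

lemma ell_f': "ell f' = sum W' SS' + ell1 f"
proof -
  have "ell1 f' = ell1 f" unfolding ell1_def B' T' fncarets_shift ..
  moreover have "ell0 f' = sum W' SS'"
    unfolding ell0_def W'_def SS'_def support_spaces_def lo'_def hi'_def B' T' by simp
  ultimately show ?thesis unfolding ell_def by simp
qed

lemma size_f: "support_size f = card Cols"
  unfolding support_size_def Cols_def support_columns_def lo_def hi_def ..
lemma size_f': "support_size f' = card Cols'"
  unfolding support_size_def Cols'_def support_columns_def lo'_def hi'_def B' T' ..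

lemma lp: "label_pair f (left_space f) = (if g 0 \<in> SS then Some (L, label Bf (g 0)) else None)"
proof -
  have "label Tf (f (g 0)) = L" unfolding fg label_def by simp
  then show ?thesis unfolding label_pair_def left_space_def SS_def support_spaces_def lo_def hi_def by simp
qed

lemma W'_eq: "p \<noteq> g 0 \<Longrightarrow> W' p = W p"
proof -
  assume h: "p \<noteq> g 0"
  have "f p \<noteq> 0" using h gf by metis
  then show ?thesis unfolding W'_def W_def f'_eq label_shift by simp
qed

lemma W'_q: "W' (g 0) = weight (if Tf 0 \<noteq> Leaf then N else R) (label Bf (g 0))"
  unfolding W'_def f'_eq fg using label_shift[of Tf 0] by simp

lemma W_q: "W (g 0) = weight L (label Bf (g 0))"
  unfolding W_def fg label_def by simp

lemma sp_nsi: "p \<in> spaces Bf \<Longrightarrow> (a, b) \<in> fleaves Bf \<Longrightarrow> a < p \<Longrightarrow> p < b \<Longrightarrow> False"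
  unfolding spaces_def using fleaves_nsi by blast

theorem main:
  "ell f' < ell f \<longleftrightarrow>
     support_size f' < support_size f
   \<or> label_pair f (left_space f) = Some (L, L)
   \<or> (label_pair f (left_space f) = Some (L, I) \<and> current_tree f = Leaf)"
proof -
  have ct: "current_tree f = Tf 0" unfolding current_tree_def ..
  show ?thesis
  proof (cases "lo' < lo")
    case True
    from lo_case[OF True] have l: "lo' = g (-1)" "lo = g 0" "Tf (-1) = Leaf" by auto
    have hh: "hi' = hi" using not_both True hi'_le by fastforce
    have lf: "(g (-1), g 0) \<in> fleaves Bf" using leafm[OF l(3)] .
    have nq: "g 0 \<notin> SS" unfolding SS_def using l by simp
    have SSeq: "SS' = insert (g 0) SS"
    proof (rule set_eqI, rule iffI)
      fix p assume p: "p \<in> SS'"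
      then have pe: "p \<in> spaces Bf" "g (-1) < p" "p < hi" unfolding SS'_def using l hh by auto
      have "\<not> p < g 0" using sp_nsi[OF pe(1) lf] pe(2) by blast
      then show "p \<in> insert (g 0) SS" unfolding SS_def using pe l by auto
    next
      fix p assume p: "p \<in> insert (g 0) SS"
      have "g 0 < hi" using gorder hi_props by linarith
      then show "p \<in> SS'" using p q_space gorder True hh unfolding SS_def SS'_def l by auto
    qed
    have "sum W' SS' = W' (g 0) + sum W' SS" unfolding SSeq using finSS(1) nq by simp
    also have "sum W' SS = sum W SS" by (rule sum.cong[OF refl]) (metis nq W'_eq)
    finally have "ell f \<le> ell f'" unfolding ell_f ell_f' by simp
    moreover have "card Cols \<le> card Cols'"
    proof (rule card_mono[OF finCols(2)])
      show "Cols \<subseteq> Cols'" unfolding Cols_def Cols'_def using True hh by auto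
    qed
    ultimately show ?thesis unfolding size_f size_f' lp using nq by simp
  next
    case False
    then have ll: "lo' = lo" using lo'_le by simp
    show ?thesis
    proof (cases "hi' < hi")
      case True
      from hi_case[OF True] have h: "hi = g 1" "hi' = g 0" "Tf 0 = Leaf" by auto
      have lf: "(g 0, g 1) \<in> fleaves Bf" using leafp[OF h(3)] .
      have lq: "lo < g 0" using ll lo'_props(2) gorder by simp
      have nq: "g 0 \<notin> SS'" unfolding SS'_def using h by simp
      have SSeq: "SS = insert (g 0) SS'"
      proof (rule set_eqI, rule iffI)
        fix p assume p: "p \<in> SS"
        then have pe: "p \<in> spaces Bf" "lo < p" "p < g 1" unfolding SS_def using h by auto
        have "\<not> g 0 < p" using sp_nsi[OF pe(1) lf] pe(3) by blast
        then show "p \<in> insert (g 0) SS'" unfolding SS'_def using pe ll h by auto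
      next
        fix p assume p: "p \<in> insert (g 0) SS'"
        then show "p \<in> SS" using q_space lq gorder ll True unfolding SS_def SS'_def h by auto
      qed
      have "sum W SS = W (g 0) + sum W SS'" unfolding SSeq using finSS(2) nq by simp
      also have "sum W SS' = sum W' SS'" by (rule sum.cong[OF refl]) (metis nq W'_eq)
      finally have "sum W SS = W (g 0) + sum W' SS'" .
      moreover have "W (g 0) \<ge> 1" unfolding W_q by (rule weight_ge1_L)
      ultimately have "ell f' < ell f" unfolding ell_f ell_f' by simp
      moreover have "card Cols' < card Cols"
      proof (rule psubset_card_mono[OF finCols(1)])
        have sub: "Cols' \<subseteq> Cols" unfolding Cols_def Cols'_def using ll True by auto
        have "(g 0, g 1) \<in> Cols" unfolding Cols_def using lf lq h by simp
        moreover have "(g 0, g 1) \<notin> Cols'" unfolding Cols'_def using h gorder by simp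
        ultimately show "Cols' \<subset> Cols" using sub by blast
      qed
      ultimately show ?thesis unfolding size_f size_f' by simp
    next
      case False
      then have hh: "hi' = hi" using hi'_le by simp
      have SSeq: "SS' = SS" unfolding SS_def SS'_def ll hh ..
      have CC: "Cols' = Cols" unfolding Cols_def Cols'_def ll hh ..
      show ?thesis
      proof (cases "g 0 \<in> SS")
        case True
        have "sum W SS = W (g 0) + sum W (SS - {g 0})" using sum.remove[OF finSS(1) True] .
        moreover have "sum W' SS = W' (g 0) + sum W' (SS - {g 0})" using sum.remove[OF finSS(1) True] .
        moreover have "sum W' (SS - {g 0}) = sum W (SS - {g 0})" by (rule sum.cong[OF refl]) (simp add: W'_eq)
        ultimately have "ell f' < ell f \<longleftrightarrow> W' (g 0) < W (g 0)" unfolding ell_f ell_f' SSeq by simp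
        also have "\<dots> \<longleftrightarrow> label Bf (g 0) = L \<or> (label Bf (g 0) = I \<and> Tf 0 = Leaf)"
          unfolding W'_q W_q by (cases "label Bf (g 0)"; cases "Tf 0 = Leaf") simp_all
        finally show ?thesis unfolding size_f size_f' CC lp ct using True by simp
      next
        case False
        have "sum W' SS = sum W SS" by (rule sum.cong[OF refl]) (metis False W'_eq)
        then have "ell f' = ell f" unfolding ell_f ell_f' SSeq by simp
        then show ?thesis unfolding size_f size_f' CC lp using False by simp
      qed
    qed
  qed
qed

end

theorem corollary4p3p4:
  assumes "f \<in> thompsonF"
  shows "ell (inv x0 \<circ> f) < ell f \<longleftrightarrow>
           support_size (inv x0 \<circ> f) < support_size f
         \<or> label_pair f (left_space f) = Some (L, L)
         \<or> (label_pair f (left_space f) = Some (L, I) \<and> current_tree f = Leaf)"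
proof -
  interpret TF f by (unfold_locales) (rule assms)
  show ?thesis by (rule main)
qed


end
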